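(* Let $f_1,\dots,f_N$ be holomorphic functions on an open set in $\mathbb{C}^{n+1}$ and let $$r=z_{n+1}+\overline{z_{n+1}}+\sum_{\mu=1}^N f_\mu\overline{f_\mu}.$$ Let $0\le k\le n$ and let $G_1,\dots,G_k$ be holomorphic functions on the same open set. Then there is a nonzero constant $c_{n,k}$ depending only on $n,k$ such that the coefficient of $dz_1\wedge\cdots\wedge dz_{n+1}\wedge d\bar z_1\wedge\cdots\wedge d\bar z_{n+1}$ in $$\partial r\wedge\bar\partial r\wedge(\partial\bar\partial r)^{n-k}\wedge\bigwedge_{\lambda=1}^k\big(dG_\lambda\wedge\overline{dG_\lambda}\big)$$ equals $$c_{n,k}\sum_{1\le\mu_1<\cdots<\mu_{n-k}\le N}\left|\frac{\partial(f_{\mu_1},\dots,f_{\mu_{n-k}},G_1,\dots,G_k)}{\partial(z_1,\dots,z_n)}+\sum_{\mu=1}^N\frac{\partial(f_{\mu_1},\dots,f_{\mu_{n-k}},G_1,\dots,G_k,f_\mu)}{\partial(z_1,\dots,z_{n+1})}\,\overline{f_\mu}\right|^2 .$$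
   Context: For holomorphic functions $h_1,\dots,h_m$, $\frac{\partial(h_1,\dots,h_m)}{\partial(z_1,\dots,z_m)}$ denotes the determinant of the $m\times m$ matrix whose $i$-th row is $(\partial h_i/\partial z_1,\dots,\partial h_i/\partial z_m)$. When $k=n$ the sum is over the single empty index tuple. *)

theory Defs
  imports "HOL-Analysis.Analysis"
begin

text \<open>Points of C^(n+1) are vectors of type complex^'m with CARD('m) = n+1;
  the coordinate z_(j+1) (j = 0..n) is x $ idx j for a bijection idx from {..n} onto 'm.\<close>

definition holo_on :: "(complex ^ 'm::finite) set \<Rightarrow> (complex ^ 'm \<Rightarrow> complex) \<Rightarrow> bool" where
  "holo_on U g \<longleftrightarrow> (\<forall>p\<in>U. \<exists>L. (g has_derivative L) (at p) \<and> (\<forall>c x. L (c *s x) = c * L x))"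

definition wz :: "(nat \<Rightarrow> 'm::finite) \<Rightarrow> nat \<Rightarrow> (complex ^ 'm \<Rightarrow> complex) \<Rightarrow> complex ^ 'm \<Rightarrow> complex" where
  "wz idx j g p = (frechet_derivative g (at p) (axis (idx j) 1)
                   - \<i> * frechet_derivative g (at p) (axis (idx j) \<i>)) / 2"

definition wzb :: "(nat \<Rightarrow> 'm::finite) \<Rightarrow> nat \<Rightarrow> (complex ^ 'm \<Rightarrow> complex) \<Rightarrow> complex ^ 'm \<Rightarrow> complex" where
  "wzb idx j g p = (frechet_derivative g (at p) (axis (idx j) 1)
                   + \<i> * frechet_derivative g (at p) (axis (idx j) \<i>)) / 2"

text \<open>Exterior algebra (at a point) on the 2m generators
  dz_1,...,dz_m, dzbar_1,...,dzbar_m, numbered 0,...,m-1, m,...,2m-1.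
  A form is given by its coefficient function on (finite) sets of generators,
  the set I standing for the wedge of the generators in I in increasing order.\<close>
type_synonym form = "nat set \<Rightarrow> complex"

definition shuffle_sign :: "nat set \<Rightarrow> nat set \<Rightarrow> complex" where
  "shuffle_sign I J = (-1) ^ card {(i, j). i \<in> I \<and> j \<in> J \<and> j < i}"

definition wedge :: "form \<Rightarrow> form \<Rightarrow> form" where
  "wedge \<alpha> \<beta> K = (\<Sum>I\<in>Pow K. shuffle_sign I (K - I) * \<alpha> I * \<beta> (K - I))"

definition form_one :: form where
  "form_one I = (if I = {} then 1 else 0)"

definition gen :: "nat \<Rightarrow> form" where
  "gen i I = (if I = {i} then 1 else 0)"

fun wedge_pow :: "form \<Rightarrow> nat \<Rightarrow> form" where
  "wedge_pow \<omega> 0 = form_one"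
| "wedge_pow \<omega> (Suc k) = wedge \<omega> (wedge_pow \<omega> k)"

fun bigwedge :: "(nat \<Rightarrow> form) \<Rightarrow> nat \<Rightarrow> form" where
  "bigwedge F 0 = form_one"
| "bigwedge F (Suc k) = wedge (bigwedge F k) (F k)"

definition del_form :: "nat \<Rightarrow> (nat \<Rightarrow> 'm::finite) \<Rightarrow> (complex ^ 'm \<Rightarrow> complex) \<Rightarrow> complex ^ 'm \<Rightarrow> form" where
  "del_form m idx g p = (\<lambda>K. \<Sum>j<m. wz idx j g p * gen j K)"

definition delbar_form :: "nat \<Rightarrow> (nat \<Rightarrow> 'm::finite) \<Rightarrow> (complex ^ 'm \<Rightarrow> complex) \<Rightarrow> complex ^ 'm \<Rightarrow> form" where
  "delbar_form m idx g p = (\<lambda>K. \<Sum>j<m. wzb idx j g p * gen (m + j) K)"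

definition d_form :: "nat \<Rightarrow> (nat \<Rightarrow> 'm::finite) \<Rightarrow> (complex ^ 'm \<Rightarrow> complex) \<Rightarrow> complex ^ 'm \<Rightarrow> form" where
  "d_form m idx g p = (\<lambda>K. del_form m idx g p K + delbar_form m idx g p K)"

definition ddbar_form :: "nat \<Rightarrow> (nat \<Rightarrow> 'm::finite) \<Rightarrow> (complex ^ 'm \<Rightarrow> complex) \<Rightarrow> complex ^ 'm \<Rightarrow> form" where
  "ddbar_form m idx g p = (\<lambda>K. \<Sum>j<m. \<Sum>l<m.
      wz idx j (wzb idx l g) p * wedge (gen j) (gen (m + l)) K)"

definition detn :: "nat \<Rightarrow> (nat \<Rightarrow> nat \<Rightarrow> complex) \<Rightarrow> complex" where
  "detn m A = (\<Sum>\<sigma> | \<sigma> permutes {..<m}. of_int (sign \<sigma>) * (\<Prod>i<m. A i (\<sigma> i)))"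

definition jac :: "(nat \<Rightarrow> 'm::finite) \<Rightarrow> (complex ^ 'm \<Rightarrow> complex) list \<Rightarrow> complex ^ 'm \<Rightarrow> complex" where
  "jac idx hs p = detn (length hs) (\<lambda>i j. wz idx j (hs ! i) p)"

end

theory Submission
  imports Defs "HOL-Complex_Analysis.Complex_Analysis" "Jordan_Normal_Form.Determinant" "HOL-Combinatorics.Multiset_Permutations"
begin

definition feq :: "form \<Rightarrow> form \<Rightarrow> bool" where
  "feq a b \<longleftrightarrow> (\<forall>K. finite K \<longrightarrow> a K = b K)"

definition inv_cnt :: "nat set \<Rightarrow> nat set \<Rightarrow> nat" where
  "inv_cnt I J = card {(i, j). i \<in> I \<and> j \<in> J \<and> j < i}"

lemma shuffle_sign_inv: "shuffle_sign I J = (-1) ^ inv_cnt I J"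
  unfolding shuffle_sign_def inv_cnt_def by simp

lemma inv_cnt_Un_left:
  assumes "finite A" "finite B" "finite C" "A \<inter> B = {}"
  shows "inv_cnt (A \<union> B) C = inv_cnt A C + inv_cnt B C"
proof -
  have e: "{(i, j). i \<in> A \<union> B \<and> j \<in> C \<and> j < i} =
     {(i, j). i \<in> A \<and> j \<in> C \<and> j < i} \<union> {(i, j). i \<in> B \<and> j \<in> C \<and> j < i}" by auto
  have f1: "finite {(i, j). i \<in> A \<and> j \<in> C \<and> j < i}"
    by (rule finite_subset[of _ "A \<times> C"]) (use assms in auto)
  have f2: "finite {(i, j). i \<in> B \<and> j \<in> C \<and> j < i}"
    by (rule finite_subset[of _ "B \<times> C"]) (use assms in auto)
  show ?thesis unfolding inv_cnt_def e
    by (rule card_Un_disjoint[OF f1 f2]) (use assms in auto)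
qed

lemma inv_cnt_Un_right:
  assumes "finite A" "finite B" "finite C" "B \<inter> C = {}"
  shows "inv_cnt A (B \<union> C) = inv_cnt A B + inv_cnt A C"
proof -
  have e: "{(i, j). i \<in> A \<and> j \<in> B \<union> C \<and> j < i} =
     {(i, j). i \<in> A \<and> j \<in> B \<and> j < i} \<union> {(i, j). i \<in> A \<and> j \<in> C \<and> j < i}" by auto
  have f1: "finite {(i, j). i \<in> A \<and> j \<in> B \<and> j < i}"
    by (rule finite_subset[of _ "A \<times> B"]) (use assms in auto)
  have f2: "finite {(i, j). i \<in> A \<and> j \<in> C \<and> j < i}"
    by (rule finite_subset[of _ "A \<times> C"]) (use assms in auto)
  show ?thesis unfolding inv_cnt_def e
    by (rule card_Un_disjoint[OF f1 f2]) (use assms in auto)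
qed

lemma sign_assoc:
  assumes "finite A" "finite B" "finite C" "A \<inter> B = {}" "A \<inter> C = {}" "B \<inter> C = {}"
  shows "shuffle_sign (A \<union> B) C * shuffle_sign A B = shuffle_sign A (B \<union> C) * shuffle_sign B C"
  unfolding shuffle_sign_inv power_add[symmetric]
  using assms by (simp add: inv_cnt_Un_left inv_cnt_Un_right ac_simps)

lemma wedge_assoc:
  assumes K: "finite K"
  shows "wedge (wedge a b) c K = wedge a (wedge b c) K"
proof -
  let ?S = "Sigma (Pow K) Pow"
  let ?T = "Sigma (Pow K) (\<lambda>J. Pow (K - J))"
  have "wedge (wedge a b) c K = (\<Sum>I\<in>Pow K. \<Sum>J\<in>Pow I.
      shuffle_sign I (K - I) * (shuffle_sign J (I - J) * a J * b (I - J)) * c (K - I))"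
    unfolding wedge_def by (simp add: sum_distrib_left sum_distrib_right)
  also have "\<dots> = (\<Sum>(I,J)\<in>?S. shuffle_sign I (K - I) * (shuffle_sign J (I - J) * a J * b (I - J)) * c (K - I))"
    by (rule sum.Sigma) (use K in \<open>auto intro: finite_subset\<close>)
  also have "\<dots> = (\<Sum>(J,L)\<in>?T. shuffle_sign J (K - J) * a J * (shuffle_sign L (K - J - L) * b L * c (K - J - L)))"
  proof (rule sum.reindex_bij_witness[where i="\<lambda>(J,L). (J \<union> L, J)" and j="\<lambda>(I,J). (J, I - J)"])
    fix x assume "x \<in> ?S"
    then obtain I J where x: "x = (I,J)" "I \<subseteq> K" "J \<subseteq> I" by auto
    define L where "L = I - J"
    have xI: "I = J \<union> L" "J \<inter> L = {}" "L \<subseteq> K - J" using x by (auto simp: L_def)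
    have fin: "finite J" "finite L" "finite (K - J - L)"
      using finite_subset[of J K] finite_subset[of L K] x xI K by auto
    have s: "shuffle_sign (J \<union> L) (K - J - L) * shuffle_sign J L = shuffle_sign J (L \<union> (K - J - L)) * shuffle_sign L (K - J - L)"
      by (rule sign_assoc) (use fin xI in auto)
    have e1: "K - (J \<union> L) = K - J - L" by auto
    have e2: "J \<union> L - J = L" using xI by auto
    have e3: "L \<union> (K - J - L) = K - J" using xI x by auto
    show "(case (case x of (I, J) \<Rightarrow> (J, I - J)) of (J, L) \<Rightarrow> shuffle_sign J (K - J) * a J * (shuffle_sign L (K - J - L) * b L * c (K - J - L))) =
          (case x of (I, J) \<Rightarrow> shuffle_sign I (K - I) * (shuffle_sign J (I - J) * a J * b (I - J)) * c (K - I))"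
      using s unfolding x(1) xI(1) e1 e2 e3 by (simp add: e1 e2 e3 L_def[symmetric] algebra_simps)
  qed auto
  also have "\<dots> = (\<Sum>J\<in>Pow K. \<Sum>L\<in>Pow (K - J). shuffle_sign J (K - J) * a J * (shuffle_sign L (K - J - L) * b L * c (K - J - L)))"
    by (rule sum.Sigma[symmetric]) (use K in \<open>auto intro: finite_subset\<close>)
  also have "\<dots> = wedge a (wedge b c) K"
    unfolding wedge_def by (simp add: sum_distrib_left)
  finally show ?thesis .
qed

lemma shuffle_sign_empty[simp]: "shuffle_sign {} J = 1" "shuffle_sign I {} = 1"
  by (simp_all add: shuffle_sign_def)

lemma wedge_one_left: "finite K \<Longrightarrow> wedge form_one b K = b K"
proof -
  assume K: "finite K"
  have "wedge form_one b K = (\<Sum>I\<in>Pow K. if I = {} then b K else 0)"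
    unfolding wedge_def form_one_def by (rule sum.cong) (auto simp: shuffle_sign_def)
  also have "\<dots> = b K" using K by (simp add: sum.delta')
  finally show ?thesis .
qed

lemma wedge_one_right: "finite K \<Longrightarrow> wedge a form_one K = a K"
proof -
  assume K: "finite K"
  have "wedge a form_one K = (\<Sum>I\<in>Pow K. if I = K then a K else 0)"
    unfolding wedge_def form_one_def by (rule sum.cong) auto
  also have "\<dots> = a K" using K by (simp add: sum.delta')
  finally show ?thesis .
qed

lemma wedge_cong:
  assumes "feq a a'" "feq b b'" "finite K"
  shows "wedge a b K = wedge a' b' K"
  unfolding wedge_def
proof (rule sum.cong[OF refl])
  fix I assume "I \<in> Pow K"
  then have "finite I" "finite (K - I)" using assms(3) finite_subset by auto
  then show "shuffle_sign I (K - I) * a I * b (K - I) = shuffle_sign I (K - I) * a' I * b' (K - I)"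
    using assms(1,2) by (simp add: feq_def)
qed

lemma feq_wedge: "feq a a' \<Longrightarrow> feq b b' \<Longrightarrow> feq (wedge a b) (wedge a' b')"
  unfolding feq_def[of "wedge _ _"] using wedge_cong by blast

lemma feq_refl[simp]: "feq a a" by (simp add: feq_def)
lemma feq_sym: "feq a b \<Longrightarrow> feq b a" by (simp add: feq_def)
lemma feq_trans: "feq a b \<Longrightarrow> feq b c \<Longrightarrow> feq a c" by (simp add: feq_def)

lemma wedge_sum_left:
  "wedge (\<lambda>K. \<Sum>x\<in>A. c x * u x K) b K = (\<Sum>x\<in>A. c x * wedge (u x) b K)"
  unfolding wedge_def
  by (simp add: sum_distrib_left sum_distrib_right algebra_simps sum.swap[where A=A])

lemma wedge_sum_right:
  "wedge a (\<lambda>K. \<Sum>x\<in>A. c x * u x K) K = (\<Sum>x\<in>A. c x * wedge a (u x) K)"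
  unfolding wedge_def
  by (simp add: sum_distrib_left sum_distrib_right algebra_simps sum.swap[where A=A])

lemma wedge_sum_left1:
  "wedge (\<lambda>K. \<Sum>x\<in>A. u x K) b K = (\<Sum>x\<in>A. wedge (u x) b K)"
  using wedge_sum_left[where c="\<lambda>_. 1"] by simp

lemma wedge_sum_right1:
  "wedge a (\<lambda>K. \<Sum>x\<in>A. u x K) K = (\<Sum>x\<in>A. wedge a (u x) K)"
  using wedge_sum_right[where c="\<lambda>_. 1"] by simp

definition wl :: "form list \<Rightarrow> form" where
  "wl xs = foldl wedge form_one xs"

lemma wl_Nil[simp]: "wl [] = form_one" by (simp add: wl_def)
lemma wl_snoc[simp]: "wl (xs @ [x]) = wedge (wl xs) x" by (simp add: wl_def)

lemma wl_append: "finite K \<Longrightarrow> wedge (wl xs) (wl ys) K = wl (xs @ ys) K"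
proof (induction ys arbitrary: K rule: rev_induct)
  case Nil
  then show ?case by (simp add: wedge_one_right)
next
  case (snoc y ys)
  have "wedge (wl xs) (wl (ys @ [y])) K = wedge (wedge (wl xs) (wl ys)) y K"
    using snoc.prems by (simp add: wedge_assoc)
  also have "\<dots> = wedge (wl (xs @ ys)) y K"
    by (rule wedge_cong) (use snoc in \<open>auto simp: feq_def\<close>)
  finally show ?case by (metis append_assoc wl_snoc)
qed

lemma wl_pair: "feq (wedge a b) (wl [a, b])"
proof -
  have "feq (wedge a b) (wedge (wedge form_one a) b)"
    by (rule feq_wedge) (auto simp: feq_def wedge_one_left)
  then show ?thesis by (simp add: wl_def)
qed

lemma bigwedge_wl:
  assumes "\<And>l. feq (F l) (wl (P l))"
  shows "feq (bigwedge F k) (wl (concat (map P [0..<k])))"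
proof (induction k)
  case 0
  then show ?case by simp
next
  case (Suc k)
  have "feq (bigwedge F (Suc k)) (wedge (wl (concat (map P [0..<k]))) (wl (P k)))"
    using feq_wedge[OF Suc assms] by simp
  then show ?case by (simp add: feq_def wl_append)
qed

lemma wedge_pow_expand:
  fixes N :: nat
  assumes P: "feq P (\<lambda>K. \<Sum>\<mu><N. wl (pr \<mu>) K)"
  shows "feq (wedge_pow P q) (\<lambda>K. \<Sum>t\<in>{t. length t = q \<and> set t \<subseteq> {..<N}}. wl (concat (map pr t)) K)"
proof (induction q)
  case 0
  have "{t. length t = 0 \<and> set t \<subseteq> {..<N}} = {[]}" by auto
  then show ?case by (simp add: feq_def wl_def)
next
  case (Suc q)
  let ?T = "\<lambda>q. {t. length t = q \<and> set t \<subseteq> {..<N}}"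
  have finT: "finite (?T q)" for q
    using finite_lists_length_eq[OF finite_lessThan[of N], of q] by (simp add: conj_commute)
  show ?case unfolding feq_def
  proof (intro allI impI)
    fix K :: "nat set" assume K: "finite K"
    have "wedge_pow P (Suc q) K = wedge (\<lambda>K. \<Sum>\<mu><N. wl (pr \<mu>) K) (\<lambda>K. \<Sum>t\<in>?T q. wl (concat (map pr t)) K) K"
      using wedge_cong[OF P Suc K] by simp
    also have "\<dots> = (\<Sum>\<mu><N. \<Sum>t\<in>?T q. wedge (wl (pr \<mu>)) (wl (concat (map pr t))) K)"
      by (simp add: wedge_sum_left1 wedge_sum_right1)
    also have "\<dots> = (\<Sum>\<mu><N. \<Sum>t\<in>?T q. wl (concat (map pr (\<mu> # t))) K)"
      using K by (simp add: wl_append)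
    also have "\<dots> = (\<Sum>(\<mu>,t)\<in>{..<N} \<times> ?T q. wl (concat (map pr (\<mu> # t))) K)"
      by (rule sum.cartesian_product)
    also have "\<dots> = (\<Sum>t\<in>?T (Suc q). wl (concat (map pr t)) K)"
    proof (rule sum.reindex_bij_witness[where i="\<lambda>t. (hd t, tl t)" and j="\<lambda>(\<mu>,t). \<mu> # t"])
      fix t assume "t \<in> ?T (Suc q)"
      then show "(case (hd t, tl t) of (\<mu>, t) \<Rightarrow> \<mu> # t) = t" by (cases t) auto
    next
      fix t assume "t \<in> ?T (Suc q)"
      then show "(hd t, tl t) \<in> {..<N} \<times> ?T q" by (cases t) auto
    qed auto
    finally show "wedge_pow P (Suc q) K = (\<Sum>t\<in>?T (Suc q). wl (concat (map pr t)) K)" .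
  qed
qed

definition one_form :: "(nat \<Rightarrow> complex) \<Rightarrow> form" where
  "one_form c K = (if card K = 1 then c (the_elem K) else 0)"

lemma wedge_one_form:
  assumes K: "finite K"
  shows "wedge W (one_form c) K = (\<Sum>x\<in>K. shuffle_sign (K - {x}) {x} * W (K - {x}) * c x)"
proof -
  let ?g = "\<lambda>I. shuffle_sign I (K - I) * W I * one_form c (K - I)"
  have "wedge W (one_form c) K = sum ?g (Pow K)" unfolding wedge_def ..
  also have "\<dots> = sum ?g ((\<lambda>x. K - {x}) ` K)"
  proof (rule sum.mono_neutral_right)
    show "finite (Pow K)" using K by simp
    show "(\<lambda>x. K - {x}) ` K \<subseteq> Pow K" by auto
    show "\<forall>I\<in>Pow K - (\<lambda>x. K - {x}) ` K. ?g I = 0"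
    proof
      fix I assume I: "I \<in> Pow K - (\<lambda>x. K - {x}) ` K"
      have "card (K - I) \<noteq> 1"
      proof
        assume "card (K - I) = 1"
        then obtain x where x: "K - I = {x}" by (auto simp: card_Suc_eq)
        then have "I = K - {x}" "x \<in> K" using I by auto
        then show False using I by auto
      qed
      then show "?g I = 0" by (simp add: one_form_def)
    qed
  qed
  also have "\<dots> = sum (?g \<circ> (\<lambda>x. K - {x})) K"
    by (rule sum.reindex) (auto simp: inj_on_def)
  also have "\<dots> = (\<Sum>x\<in>K. shuffle_sign (K - {x}) {x} * W (K - {x}) * c x)"
  proof (rule sum.cong[OF refl])
    fix x assume x: "x \<in> K"
    then have e: "K - (K - {x}) = {x}" by auto
    show "(?g \<circ> (\<lambda>x. K - {x})) x = shuffle_sign (K - {x}) {x} * W (K - {x}) * c x"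
      by (simp add: e one_form_def)
  qed
  finally show ?thesis .
qed

lemma sign_single:
  assumes "finite K" "x \<in> K"
  shows "shuffle_sign (K - {x}) {x} = (-1) ^ card {i\<in>K. x < i}"
proof -
  have "{(i, j). i \<in> K - {x} \<and> j \<in> {x} \<and> j < i} = (\<lambda>i. (i, x)) ` {i\<in>K. x < i}" by auto
  moreover have "card ((\<lambda>i. (i, x)) ` {i\<in>K. x < i}) = card {i\<in>K. x < i}"
    by (rule card_image) (auto simp: inj_on_def)
  ultimately show ?thesis unfolding shuffle_sign_def by simp
qed

lemma sorted_above:
  assumes K: "finite K" and j: "j < card K"
  shows "card {i\<in>K. sorted_list_of_set K ! j < i} = card K - Suc j"
proof -
  let ?xs = "sorted_list_of_set K"
  have sw: "sorted_wrt (<) ?xs" by (rule strict_sorted_list_of_set)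
  have len: "length ?xs = card K" using K by simp
  have dist: "distinct ?xs" by simp
  have "{i\<in>K. ?xs ! j < i} = set (drop (Suc j) ?xs)"
  proof (intro equalityI subsetI)
    fix i assume "i \<in> {i\<in>K. ?xs ! j < i}"
    then have i: "i \<in> set ?xs" "?xs ! j < i" using K by auto
    then obtain t where t: "t < length ?xs" "i = ?xs ! t" by (auto simp: in_set_conv_nth)
    have "j < t"
    proof (rule ccontr)
      assume "\<not> j < t"
      then have "t \<le> j" by simp
      then have "?xs ! t \<le> ?xs ! j"
        using sorted_wrt_nth_less[OF sw, of t j] j len by (cases "t = j") auto
      then show False using i t by simp
    qed
    then show "i \<in> set (drop (Suc j) ?xs)" using t
      by (auto simp: in_set_conv_nth intro!: exI[where x="t - Suc j"])
  next
    fix i assume "i \<in> set (drop (Suc j) ?xs)"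
    then obtain t where t: "t < length ?xs - Suc j" "i = ?xs ! (Suc j + t)"
      by (auto simp: in_set_conv_nth)
    then have "?xs ! j < i" using sorted_wrt_nth_less[OF sw, of j "Suc j + t"] by auto
    moreover have "i \<in> K" using t K by (metis add.commute less_diff_conv nth_mem set_sorted_list_of_set)
    ultimately show "i \<in> {i\<in>K. ?xs ! j < i}" by simp
  qed
  then show ?thesis using dist len by (simp add: distinct_card)
qed

lemma sorted_remove_nth:
  assumes K: "finite K" and j: "j < card K" and j': "j' < card K - 1"
  shows "sorted_list_of_set (K - {sorted_list_of_set K ! j}) ! j' = sorted_list_of_set K ! (insert_index j j')"
proof -
  let ?xs = "sorted_list_of_set K"
  have len: "length ?xs = card K" using K by simp
  have dist: "distinct ?xs" by simp
  have "sorted_list_of_set (K - {?xs ! j}) = remove1 (?xs ! j) ?xs"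
    using K by (simp add: sorted_list_of_set_remove)
  also have "\<dots> = take j ?xs @ drop (Suc j) ?xs"
  proof -
    have d: "?xs = take j ?xs @ ?xs ! j # drop (Suc j) ?xs" using j len by (simp add: id_take_nth_drop)
    have "distinct (take j ?xs @ ?xs ! j # drop (Suc j) ?xs)" using dist d by metis
    then have "?xs ! j \<notin> set (take j ?xs)" by simp
    then have "remove1 (?xs ! j) (take j ?xs @ ?xs ! j # drop (Suc j) ?xs) = take j ?xs @ drop (Suc j) ?xs"
      by (simp add: remove1_append)
    then show ?thesis using d by metis
  qed
  finally have e: "sorted_list_of_set (K - {?xs ! j}) = take j ?xs @ drop (Suc j) ?xs" .
  show ?thesis unfolding e using j j' len
    by (auto simp: nth_append insert_index_def min_def)
qed

lemma det_mat0: "det (mat 0 0 f) = (1::'a::comm_ring_1)"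
  by (simp add: det_def)

lemma wl_one_forms:
  "finite K \<Longrightarrow> card K = length cs \<Longrightarrow>
   wl (map one_form cs) K = det (mat (length cs) (length cs) (\<lambda>(i,j). (cs ! i) (sorted_list_of_set K ! j)))"
proof (induction cs arbitrary: K rule: rev_induct)
  case Nil
  then have "K = {}" by simp
  then show ?case by (simp add: form_one_def det_mat0)
next
  case (snoc c cs)
  let ?l = "length cs"
  let ?xs = "sorted_list_of_set K"
  let ?M = "mat (Suc ?l) (Suc ?l) (\<lambda>(i,j). ((cs @ [c]) ! i) (?xs ! j))"
  have K: "finite K" "card K = Suc ?l" using snoc.prems by auto
  have len: "length ?xs = Suc ?l" using K by simp
  have "wl (map one_form (cs @ [c])) K = wedge (wl (map one_form cs)) (one_form c) K" by simp
  also have "\<dots> = (\<Sum>x\<in>K. shuffle_sign (K - {x}) {x} * wl (map one_form cs) (K - {x}) * c x)"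
    using K by (simp add: wedge_one_form)
  also have "\<dots> = (\<Sum>j<Suc ?l. shuffle_sign (K - {?xs ! j}) {?xs ! j} * wl (map one_form cs) (K - {?xs ! j}) * c (?xs ! j))"
  proof -
    have b: "bij_betw ((!) ?xs) {..<Suc ?l} K"
      by (rule bij_betw_nth) (use K len in auto)
    show ?thesis by (rule sum.reindex_bij_betw[OF b, symmetric])
  qed
  also have "\<dots> = (\<Sum>j<Suc ?l. ?M $$ (?l, j) * cofactor ?M ?l j)"
  proof (rule sum.cong[OF refl])
    fix j assume j: "j \<in> {..<Suc ?l}"
    then have jl: "j < Suc ?l" by simp
    have xj: "?xs ! j \<in> K" using K len jl by (metis nth_mem set_sorted_list_of_set)
    have cK: "card (K - {?xs ! j}) = ?l" using K xj by simp
    have s: "shuffle_sign (K - {?xs ! j}) {?xs ! j} = (-1) ^ (?l + j)"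
    proof -
      have "shuffle_sign (K - {?xs ! j}) {?xs ! j} = (-1) ^ (?l - j)"
        using sign_single[OF K(1) xj] sorted_above[OF K(1), of j] K jl by simp
      also have "\<dots> = (-1) ^ (?l + j)"
      proof -
        have e: "?l + j = (?l - j) + 2 * j" using jl by simp
        have "(-1::complex) ^ (?l + j) = (-1) ^ (?l - j) * ((-1) ^ 2) ^ j"
          unfolding e power_add power_mult ..
        then show ?thesis by simp
      qed
      finally show ?thesis .
    qed
    have md: "mat_delete ?M ?l j = mat ?l ?l (\<lambda>(i,j'). (cs ! i) (sorted_list_of_set (K - {?xs ! j}) ! j'))"
    proof (rule eq_matI)
      fix i j' assume ij: "i < dim_row (mat ?l ?l (\<lambda>(i,j'). (cs ! i) (sorted_list_of_set (K - {?xs ! j}) ! j')))"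
        "j' < dim_col (mat ?l ?l (\<lambda>(i,j'). (cs ! i) (sorted_list_of_set (K - {?xs ! j}) ! j')))"
      then have i: "i < ?l" and j'l: "j' < ?l" by auto
      have r: "sorted_list_of_set (K - {?xs ! j}) ! j' = ?xs ! (insert_index j j')"
        by (rule sorted_remove_nth) (use K jl j'l in auto)
      have ii: "insert_index j j' < Suc ?l" using j'l jl by (auto simp: insert_index_def)
      show "mat_delete ?M ?l j $$ (i, j') = mat ?l ?l (\<lambda>(i,j'). (cs ! i) (sorted_list_of_set (K - {?xs ! j}) ! j')) $$ (i, j')"
        using i j'l ii r unfolding mat_delete_def
        by (simp add: nth_append insert_index_def)
    qed auto
    have "wl (map one_form cs) (K - {?xs ! j}) = det (mat ?l ?l (\<lambda>(i,j'). (cs ! i) (sorted_list_of_set (K - {?xs ! j}) ! j')))"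
      using snoc.IH[of "K - {?xs ! j}"] K cK by simp
    then show "shuffle_sign (K - {?xs ! j}) {?xs ! j} * wl (map one_form cs) (K - {?xs ! j}) * c (?xs ! j) =
        ?M $$ (?l, j) * cofactor ?M ?l j"
      unfolding cofactor_def md[symmetric] s using jl by (simp add: nth_append)
  qed
  also have "\<dots> = det ?M"
    by (rule laplace_expansion_row[symmetric]) auto
  finally show ?case by simp
qed

definition hol :: "nat \<Rightarrow> (nat \<Rightarrow> complex) \<Rightarrow> nat \<Rightarrow> complex" where
  "hol m a t = (if t < m then a t else 0)"
definition ahol :: "nat \<Rightarrow> (nat \<Rightarrow> complex) \<Rightarrow> nat \<Rightarrow> complex" where
  "ahol m a t = (if m \<le> t \<and> t < 2 * m then cnj (a (t - m)) else 0)"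
definition detm :: "nat \<Rightarrow> (nat \<Rightarrow> complex) list \<Rightarrow> complex" where
  "detm m as = det (mat m m (\<lambda>(i,j). (as ! i) j))"
definition blk :: "nat \<Rightarrow> nat \<Rightarrow> nat" where
  "blk m i = (if i < m then 2 * i else if i < 2 * m then 2 * (i - m) + 1 else i)"

lemma concat_pair_len: "length (concat (map (\<lambda>a. [f a, g a]) as)) = 2 * length as"
  by (induction as) auto

lemma concat_pair_nth:
  "i < length as \<Longrightarrow> concat (map (\<lambda>a. [f a, g a]) as) ! (2 * i) = f (as ! i) \<and>
     concat (map (\<lambda>a. [f a, g a]) as) ! (Suc (2 * i)) = g (as ! i)"
proof (induction as arbitrary: i)
  case Nil then show ?case by simp
next
  case (Cons a as)
  show ?case
  proof (cases i)
    case 0 then show ?thesis by simp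
  next
    case (Suc i')
    then have "2 * i = Suc (Suc (2 * i'))" by simp
    then show ?thesis using Cons Suc by simp
  qed
qed

lemma blk_permutes: "blk m permutes {0..<2 * m}"
proof (rule bij_imp_permutes)
  have par: "2 * x \<noteq> Suc (2 * z)" for x z :: nat by presburger
  have inj: "inj_on (blk m) {0..<2 * m}"
  proof (rule inj_onI)
    fix x y assume x: "x \<in> {0..<2 * m}" and y: "y \<in> {0..<2 * m}" and e: "blk m x = blk m y"
    show "x = y"
    proof (cases "x < m")
      case True
      then show ?thesis using e x y par[of x "y - m"] unfolding blk_def by (auto split: if_splits)
    next
      case False
      then show ?thesis using e x y par[of y "x - m"] unfolding blk_def by (auto split: if_splits)
    qed
  qed
  have sub: "blk m ` {0..<2 * m} \<subseteq> {0..<2 * m}"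
    unfolding blk_def by auto
  show "bij_betw (blk m) {0..<2 * m} {0..<2 * m}"
    unfolding bij_betw_def using inj endo_inj_surj[OF _ sub inj] by auto
  show "\<And>x. x \<notin> {0..<2 * m} \<Longrightarrow> blk m x = x" unfolding blk_def by auto
qed

lemma signof_sq: "(signof p :: complex) * signof p = 1"
proof -
  have "(of_int (sign p * sign p) :: complex) = 1" by simp
  then show ?thesis by (simp only: of_int_mult)
qed

lemma det_cnj: "det (mat m m (\<lambda>(i,j). cnj (f i j))) = cnj (det (mat m m (\<lambda>(i,j). f i j)))"
  by (simp add: det_def' [of _ m] cnj_sum cnj_prod)

lemma top_pairs:
  assumes m: "m = length as"
  shows "wl (map one_form (concat (map (\<lambda>a. [hol m a, ahol m a]) as))) {..<2 * m}
       = signof (blk m) * (detm m as * cnj (detm m as))"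
proof -
  let ?cs = "concat (map (\<lambda>a. [hol m a, ahol m a]) as)"
  have lcs: "length ?cs = 2 * m" using m by (simp add: concat_pair_len)
  let ?M = "mat (2 * m) (2 * m) (\<lambda>(i,j). (?cs ! i) j)"
  have sl: "sorted_list_of_set {..<2 * m} = [0..<2 * m]"
    by (simp add: lessThan_atLeast0)
  have "wl (map one_form ?cs) {..<2 * m} = det (mat (2 * m) (2 * m) (\<lambda>(i,j). (?cs ! i) (sorted_list_of_set {..<2 * m} ! j)))"
    using wl_one_forms[of "{..<2 * m}" ?cs] lcs by simp
  also have "\<dots> = det ?M"
    unfolding sl by (rule arg_cong[where f=det]) (rule eq_matI, auto)
  finally have e1: "wl (map one_form ?cs) {..<2 * m} = det ?M" .
  let ?A = "mat m m (\<lambda>(i,j). (as ! i) j)"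
  let ?Ab = "mat m m (\<lambda>(i,j). cnj ((as ! i) j))"
  have pm: "det (mat (2 * m) (2 * m) (\<lambda>(i,j). ?M $$ (blk m i, j))) = signof (blk m) * det ?M"
    by (rule det_permute_rows[OF _ blk_permutes]) auto
  have fb: "mat (2 * m) (2 * m) (\<lambda>(i,j). ?M $$ (blk m i, j)) = four_block_mat ?A (0\<^sub>m m m) (0\<^sub>m m m) ?Ab"
  proof (rule eq_matI)
    fix i j assume "i < dim_row (four_block_mat ?A (0\<^sub>m m m) (0\<^sub>m m m) ?Ab)"
      "j < dim_col (four_block_mat ?A (0\<^sub>m m m) (0\<^sub>m m m) ?Ab)"
    then have ij: "i < 2 * m" "j < 2 * m" by auto
    have bi: "blk m i < 2 * m" using ij unfolding blk_def by auto
    show "mat (2 * m) (2 * m) (\<lambda>(i,j). ?M $$ (blk m i, j)) $$ (i, j) = four_block_mat ?A (0\<^sub>m m m) (0\<^sub>m m m) ?Ab $$ (i, j)"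
    proof (cases "i < m")
      case True
      have "?cs ! (2 * i) = hol m (as ! i)" using concat_pair_nth[of i as "hol m" "ahol m"] True m by auto
      then show ?thesis using ij bi True by (simp add: blk_def hol_def)
    next
      case False
      have "?cs ! (Suc (2 * (i - m))) = ahol m (as ! (i - m))" using concat_pair_nth[of "i - m" as "hol m" "ahol m"] False ij m by auto
      then show ?thesis using ij bi False by (simp add: blk_def ahol_def)
    qed
  qed auto
  have Z0: "det (four_block_mat ?A (0\<^sub>m m m) (0\<^sub>m m m) ?Ab) = det ?A * det ?Ab"
    by (rule det_four_block_mat_lower_left_zero) auto
  have Z: "det (four_block_mat ?A (0\<^sub>m m m) (0\<^sub>m m m) ?Ab) = det ?A * cnj (det ?A)"
    unfolding Z0 det_cnj ..
  have X: "signof (blk m) * det ?M = detm m as * cnj (detm m as)"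
  proof -
    have "signof (blk m) * det ?M = det (mat (2 * m) (2 * m) (\<lambda>(i,j). ?M $$ (blk m i, j)))"
      by (rule pm[symmetric])
    also have "\<dots> = det (four_block_mat ?A (0\<^sub>m m m) (0\<^sub>m m m) ?Ab)" by (rule arg_cong[OF fb])
    also have "\<dots> = det ?A * cnj (det ?A)" by (rule Z)
    finally show ?thesis unfolding detm_def .
  qed
  have "det ?M = (signof (blk m) * signof (blk m)) * det ?M" by (simp only: signof_sq mult_1_left)
  also have "\<dots> = signof (blk m) * (signof (blk m) * det ?M)" by (simp only: mult.assoc)
  also have "\<dots> = signof (blk m) * (detm m as * cnj (detm m as))" by (simp only: X)
  finally have Y: "det ?M = signof (blk m) * (detm m as * cnj (detm m as))" .
  show ?thesis using e1 Y by (rule trans)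
qed

lemma collapse:
  fixes g :: "nat list \<Rightarrow> complex" and N q :: nat
  assumes rep: "\<And>t. length t = q \<Longrightarrow> set t \<subseteq> {..<N} \<Longrightarrow> \<not> distinct t \<Longrightarrow> g t = 0"
    and perm: "\<And>t. length t = q \<Longrightarrow> set t \<subseteq> {..<N} \<Longrightarrow> distinct t \<Longrightarrow> g t = g (sorted_list_of_set (set t))"
  shows "(\<Sum>t\<in>{t. length t = q \<and> set t \<subseteq> {..<N}}. g t)
       = of_nat (fact q) * (\<Sum>S\<in>{S. S \<subseteq> {..<N} \<and> card S = q}. g (sorted_list_of_set S))"
proof -
  let ?T = "{t. length t = q \<and> set t \<subseteq> {..<N}}"
  let ?D = "{t. length t = q \<and> set t \<subseteq> {..<N} \<and> distinct t}"
  let ?SS = "{S. S \<subseteq> {..<N} \<and> card S = q}"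
  have finT: "finite ?T"
    using finite_lists_length_eq[OF finite_lessThan[of N], of q] by (simp add: conj_commute)
  have "(\<Sum>t\<in>?T. g t) = (\<Sum>t\<in>?D. g t)"
    by (rule sum.mono_neutral_right) (use finT rep in auto)
  also have "?D = (\<Union>S\<in>?SS. permutations_of_set S)"
  proof (intro equalityI subsetI)
    fix t assume t: "t \<in> ?D"
    then have "set t \<in> ?SS" "t \<in> permutations_of_set (set t)"
      by (auto simp: permutations_of_set_def distinct_card)
    then show "t \<in> (\<Union>S\<in>?SS. permutations_of_set S)" by blast
  next
    fix t assume "t \<in> (\<Union>S\<in>?SS. permutations_of_set S)"
    then show "t \<in> ?D" by (auto simp: permutations_of_set_def distinct_card)
  qed
  also have "(\<Sum>t\<in>(\<Union>S\<in>?SS. permutations_of_set S). g t) = (\<Sum>S\<in>?SS. \<Sum>t\<in>permutations_of_set S. g t)"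
  proof (rule sum.UNION_disjoint)
    show "finite ?SS" by (rule finite_subset[of _ "Pow {..<N}"]) auto
    show "\<forall>S\<in>?SS. finite (permutations_of_set S)" by auto
    show "\<forall>S\<in>?SS. \<forall>S'\<in>?SS. S \<noteq> S' \<longrightarrow> permutations_of_set S \<inter> permutations_of_set S' = {}"
      by (auto simp: permutations_of_set_def)
  qed
  also have "\<dots> = (\<Sum>S\<in>?SS. of_nat (fact q) * g (sorted_list_of_set S))"
  proof (rule sum.cong[OF refl])
    fix S assume S: "S \<in> ?SS"
    then have fS: "finite S" using finite_subset by auto
    have "(\<Sum>t\<in>permutations_of_set S. g t) = (\<Sum>t\<in>permutations_of_set S. g (sorted_list_of_set S))"
    proof (rule sum.cong[OF refl])
      fix t assume "t \<in> permutations_of_set S"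
      then have t: "set t = S" "distinct t" by (auto simp: permutations_of_set_def)
      then have "length t = q" using S distinct_card[OF t(2)] by simp
      then show "g t = g (sorted_list_of_set S)" using perm[of t] t S by auto
    qed
    also have "\<dots> = of_nat (fact q) * g (sorted_list_of_set S)" using S fS by simp
    finally show "(\<Sum>t\<in>permutations_of_set S. g t) = of_nat (fact q) * g (sorted_list_of_set S)" .
  qed
  also have "\<dots> = of_nat (fact q) * (\<Sum>S\<in>?SS. g (sorted_list_of_set S))"
    by (simp add: sum_distrib_left)
  finally show ?thesis .
qed

lemma detn_det: "detn m A = det (mat m m (\<lambda>(i,j). A i j))"
proof -
  have "det (mat m m (\<lambda>(i,j). A i j)) = (\<Sum>p\<in>{p. p permutes {0..<m}}. signof p * (\<Prod>i=0..<m. mat m m (\<lambda>(i,j). A i j) $$ (i, p i)))"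
    by (rule det_def') simp
  also have "\<dots> = (\<Sum>p\<in>{p. p permutes {..<m}}. signof p * (\<Prod>i<m. A i (p i)))"
  proof (rule sum.cong)
    show "{p. p permutes {0..<m}} = {p. p permutes {..<m}}" by (simp add: atLeast0LessThan)
  next
    fix p assume "p \<in> {p. p permutes {..<m}}"
    then have p: "p permutes {..<m}" by simp
    have "(\<Prod>i=0..<m. mat m m (\<lambda>(i,j). A i j) $$ (i, p i)) = (\<Prod>i<m. A i (p i))"
      unfolding atLeast0LessThan
    proof (rule prod.cong[OF refl])
      fix i assume i: "i \<in> {..<m}"
      then have "p i \<in> {..<m}" using permutes_in_image[OF p] by blast
      then show "mat m m (\<lambda>(i,j). A i j) $$ (i, p i) = A i (p i)" using i by simp
    qed
    then show "signof p * (\<Prod>i=0..<m. mat m m (\<lambda>(i,j). A i j) $$ (i, p i)) = signof p * (\<Prod>i<m. A i (p i))"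
      by simp
  qed
  finally show ?thesis unfolding detn_def by simp
qed

lemma detm_detn: "detm m as = detn m (\<lambda>i j. (as ! i) j)"
  unfolding detm_def detn_det by simp

lemma detm_cons:
  assumes m: "0 < m"
  shows "detm m (v # R) = (\<Sum>p\<in>{p. p permutes {0..<m}}. signof p * (v (p 0) * (\<Prod>i\<in>{Suc 0..<m}. (R ! (i - 1)) (p i))))"
proof -
  have "detm m (v # R) = (\<Sum>p\<in>{p. p permutes {0..<m}}. signof p * (\<Prod>i=0..<m. mat m m (\<lambda>(i,j). ((v # R) ! i) j) $$ (i, p i)))"
    unfolding detm_def by (rule det_def') simp
  also have "\<dots> = (\<Sum>p\<in>{p. p permutes {0..<m}}. signof p * (v (p 0) * (\<Prod>i\<in>{Suc 0..<m}. (R ! (i - 1)) (p i))))"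
  proof (rule sum.cong[OF refl])
    fix p assume "p \<in> {p. p permutes {0..<m}}"
    then have p: "p permutes {0..<m}" by simp
    have "(\<Prod>i=0..<m. mat m m (\<lambda>(i,j). ((v # R) ! i) j) $$ (i, p i))
        = mat m m (\<lambda>(i,j). ((v # R) ! i) j) $$ (0, p 0) * (\<Prod>i\<in>{Suc 0..<m}. mat m m (\<lambda>(i,j). ((v # R) ! i) j) $$ (i, p i))"
      using m by (simp add: prod.atLeast_Suc_lessThan)
    also have "\<dots> = v (p 0) * (\<Prod>i\<in>{Suc 0..<m}. (R ! (i - 1)) (p i))"
    proof -
      have "p 0 < m" using permutes_in_image[OF p, of 0] m by simp
      moreover have "(\<Prod>i\<in>{Suc 0..<m}. mat m m (\<lambda>(i,j). ((v # R) ! i) j) $$ (i, p i)) = (\<Prod>i\<in>{Suc 0..<m}. (R ! (i - 1)) (p i))"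
      proof (rule prod.cong[OF refl])
        fix i assume i: "i \<in> {Suc 0..<m}"
        then have "p i \<in> {0..<m}" using permutes_in_image[OF p] by auto
        then show "mat m m (\<lambda>(i,j). ((v # R) ! i) j) $$ (i, p i) = (R ! (i - 1)) (p i)"
          using i by (simp add: nth_Cons')
      qed
      ultimately show ?thesis using m by simp
    qed
    finally show "signof p * (\<Prod>i=0..<m. mat m m (\<lambda>(i,j). ((v # R) ! i) j) $$ (i, p i)) =
        signof p * (v (p 0) * (\<Prod>i\<in>{Suc 0..<m}. (R ! (i - 1)) (p i)))" by simp
  qed
  finally show ?thesis .
qed

lemma detm_row0_lin:
  assumes m: "0 < m" and S: "finite S"
  shows "detm m ((\<lambda>j. a j + (\<Sum>\<mu>\<in>S. c \<mu> * b \<mu> j)) # R) = detm m (a # R) + (\<Sum>\<mu>\<in>S. c \<mu> * detm m (b \<mu> # R))"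
proof -
  let ?P = "{p. p permutes {0..<m}}"
  let ?Q = "\<lambda>p. \<Prod>i\<in>{Suc 0..<m}. (R ! (i - 1)) (p i)"
  have "detm m ((\<lambda>j. a j + (\<Sum>\<mu>\<in>S. c \<mu> * b \<mu> j)) # R)
     = (\<Sum>p\<in>?P. signof p * ((a (p 0) + (\<Sum>\<mu>\<in>S. c \<mu> * b \<mu> (p 0))) * ?Q p))"
    by (rule detm_cons[OF m])
  also have "\<dots> = (\<Sum>p\<in>?P. signof p * (a (p 0) * ?Q p)) + (\<Sum>p\<in>?P. \<Sum>\<mu>\<in>S. c \<mu> * (signof p * (b \<mu> (p 0) * ?Q p)))"
    by (simp add: sum.distrib[symmetric] sum_distrib_left sum_distrib_right algebra_simps)
  also have "(\<Sum>p\<in>?P. \<Sum>\<mu>\<in>S. c \<mu> * (signof p * (b \<mu> (p 0) * ?Q p))) = (\<Sum>\<mu>\<in>S. c \<mu> * (\<Sum>p\<in>?P. signof p * (b \<mu> (p 0) * ?Q p)))"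
    by (simp add: sum.swap[of _ ?P] sum_distrib_left)
  finally show ?thesis by (simp add: detm_cons[OF m])
qed

definition cyc :: "nat \<Rightarrow> nat \<Rightarrow> nat" where
  "cyc n i = (if i = 0 then n else if i \<le> n then i - 1 else i)"

lemma cyc_permutes: "cyc n permutes {0..<Suc n}"
proof (rule bij_imp_permutes)
  have inj: "inj_on (cyc n) {0..<Suc n}"
    by (rule inj_onI) (auto simp: cyc_def split: if_splits)
  have sub: "cyc n ` {0..<Suc n} \<subseteq> {0..<Suc n}" by (auto simp: cyc_def)
  show "bij_betw (cyc n) {0..<Suc n} {0..<Suc n}"
    unfolding bij_betw_def using inj endo_inj_surj[OF _ sub inj] by auto
  show "\<And>x. x \<notin> {0..<Suc n} \<Longrightarrow> cyc n x = x" by (auto simp: cyc_def)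
qed

lemma detm_rotate:
  assumes R: "length R = n"
  shows "detm (Suc n) (v # R) = signof (cyc n) * detm (Suc n) (R @ [v])"
proof -
  let ?B = "mat (Suc n) (Suc n) (\<lambda>(i,j). ((R @ [v]) ! i) j)"
  have "det (mat (Suc n) (Suc n) (\<lambda>(i,j). ?B $$ (cyc n i, j))) = signof (cyc n) * det ?B"
    by (rule det_permute_rows[OF _ cyc_permutes]) simp
  moreover have "mat (Suc n) (Suc n) (\<lambda>(i,j). ?B $$ (cyc n i, j)) = mat (Suc n) (Suc n) (\<lambda>(i,j). ((v # R) ! i) j)"
  proof (rule eq_matI)
    fix i j assume ij: "i < dim_row (mat (Suc n) (Suc n) (\<lambda>(i,j). ((v # R) ! i) j))"
      "j < dim_col (mat (Suc n) (Suc n) (\<lambda>(i,j). ((v # R) ! i) j))"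
    then have "cyc n i < Suc n" by (auto simp: cyc_def)
    then show "mat (Suc n) (Suc n) (\<lambda>(i,j). ?B $$ (cyc n i, j)) $$ (i, j) = mat (Suc n) (Suc n) (\<lambda>(i,j). ((v # R) ! i) j) $$ (i, j)"
      using ij R by (auto simp: cyc_def nth_append nth_Cons')
  qed auto
  ultimately show ?thesis unfolding detm_def by simp
qed

lemma detm_last_unit:
  assumes R: "length R = n"
  shows "detm (Suc n) (R @ [\<lambda>j. if j = n then 1 else 0]) = detn n (\<lambda>i j. (R ! i) j)"
proof -
  let ?A = "mat (Suc n) (Suc n) (\<lambda>(i,j). ((R @ [\<lambda>j. if j = n then 1 else 0]) ! i) j)"
  have "det ?A = (\<Sum>j<Suc n. ?A $$ (n, j) * cofactor ?A n j)"
    by (rule laplace_expansion_row) auto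
  also have "\<dots> = (\<Sum>j<Suc n. if j = n then cofactor ?A n n else 0)"
    by (rule sum.cong[OF refl]) (use R in \<open>auto simp: nth_append\<close>)
  also have "\<dots> = cofactor ?A n n" by simp
  also have "\<dots> = det (mat_delete ?A n n)"
    by (simp add: cofactor_def flip: mult_2)
  also have "mat_delete ?A n n = mat n n (\<lambda>(i,j). (R ! i) j)"
    by (rule eq_matI) (use R in \<open>auto simp: mat_delete_def nth_append\<close>)
  finally show ?thesis unfolding detm_def detn_det by simp
qed

lemma detm_identical:
  assumes "i < j" "j < m" "as ! i = as ! j"
  shows "detm m as = 0"
  unfolding detm_def
  by (rule det_identical_rows[of _ m i j]) (use assms in auto)

definition rho :: "(nat \<Rightarrow> nat) \<Rightarrow> nat \<Rightarrow> nat \<Rightarrow> nat" where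
  "rho \<pi> q i = (if 1 \<le> i \<and> i \<le> q then Suc (\<pi> (i - 1)) else i)"

lemma rho_permutes:
  assumes \<pi>: "\<pi> permutes {..<q}" and m: "q < m"
  shows "rho \<pi> q permutes {0..<m}"
proof (rule bij_imp_permutes)
  have pin: "\<And>i. i < q \<Longrightarrow> \<pi> i < q" using permutes_in_image[OF \<pi>] by simp
  have pinj: "\<And>i i'. \<pi> i = \<pi> i' \<Longrightarrow> i = i'" using permutes_inj[OF \<pi>] by (simp add: inj_eq)
  have inj: "inj_on (rho \<pi> q) {0..<m}"
  proof (rule inj_onI)
    fix x y assume x: "x \<in> {0..<m}" and y: "y \<in> {0..<m}" and e: "rho \<pi> q x = rho \<pi> q y"
    show "x = y"
    proof (cases "1 \<le> x \<and> x \<le> q"; cases "1 \<le> y \<and> y \<le> q")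
      assume a: "1 \<le> x \<and> x \<le> q" "1 \<le> y \<and> y \<le> q"
      then have "\<pi> (x - 1) = \<pi> (y - 1)" using e by (simp add: rho_def)
      then show ?thesis using pinj a by fastforce
    next
      assume a: "1 \<le> x \<and> x \<le> q" "\<not> (1 \<le> y \<and> y \<le> q)"
      have "rho \<pi> q y = y" "rho \<pi> q x = Suc (\<pi> (x - 1))" unfolding rho_def using a by auto
      then have "Suc (\<pi> (x - 1)) = y" using e by simp
      moreover have "\<pi> (x - 1) < q" by (rule pin) (use a in linarith)
      ultimately show ?thesis using a by simp
    next
      assume a: "\<not> (1 \<le> x \<and> x \<le> q)" "1 \<le> y \<and> y \<le> q"
      have "rho \<pi> q x = x" "rho \<pi> q y = Suc (\<pi> (y - 1))" unfolding rho_def using a by auto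
      then have "Suc (\<pi> (y - 1)) = x" using e by simp
      moreover have "\<pi> (y - 1) < q" by (rule pin) (use a in linarith)
      ultimately show ?thesis using a by simp
    next
      assume a: "\<not> (1 \<le> x \<and> x \<le> q)" "\<not> (1 \<le> y \<and> y \<le> q)"
      then show ?thesis using e unfolding rho_def by auto
    qed
  qed
  have sub: "rho \<pi> q ` {0..<m} \<subseteq> {0..<m}"
  proof
    fix y assume "y \<in> rho \<pi> q ` {0..<m}"
    then obtain x where x: "x < m" "y = rho \<pi> q x" by auto
    show "y \<in> {0..<m}"
    proof (cases "1 \<le> x \<and> x \<le> q")
      case True
      then have "\<pi> (x - 1) < q" by (intro pin) linarith
      then show ?thesis using x True m by (simp add: rho_def)
    next
      case False then show ?thesis using x unfolding rho_def by auto
    qed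
  qed
  show "bij_betw (rho \<pi> q) {0..<m} {0..<m}"
    unfolding bij_betw_def using inj endo_inj_surj[OF _ sub inj] by auto
  show "\<And>x. x \<notin> {0..<m} \<Longrightarrow> rho \<pi> q x = x" using m by (auto simp: rho_def)
qed

lemma detm_perm:
  assumes \<pi>: "\<pi> permutes {..<length xs}" and m: "m = Suc (length xs + length W)"
  shows "detm m (a # map R (permute_list \<pi> xs) @ W) = signof (rho \<pi> (length xs)) * detm m (a # map R xs @ W)"
proof -
  let ?q = "length xs"
  let ?B = "mat m m (\<lambda>(i,j). ((a # map R xs @ W) ! i) j)"
  have pin: "\<And>i. i < ?q \<Longrightarrow> \<pi> i < ?q" using permutes_in_image[OF \<pi>] by simp
  have "det (mat m m (\<lambda>(i,j). ?B $$ (rho \<pi> ?q i, j))) = signof (rho \<pi> ?q) * det ?B"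
    by (rule det_permute_rows[OF _ rho_permutes[OF \<pi>]]) (use m in auto)
  moreover have "mat m m (\<lambda>(i,j). ?B $$ (rho \<pi> ?q i, j)) = mat m m (\<lambda>(i,j). ((a # map R (permute_list \<pi> xs) @ W) ! i) j)"
  proof (rule eq_matI)
    fix i j assume ij: "i < dim_row (mat m m (\<lambda>(i,j). ((a # map R (permute_list \<pi> xs) @ W) ! i) j))"
      "j < dim_col (mat m m (\<lambda>(i,j). ((a # map R (permute_list \<pi> xs) @ W) ! i) j))"
    then have i: "i < m" and j: "j < m" by auto
    have ri: "rho \<pi> ?q i < m"
    proof (cases "1 \<le> i \<and> i \<le> ?q")
      case True
      then have "\<pi> (i - 1) < ?q" by (intro pin) linarith
      then show ?thesis using True m by (simp add: rho_def)
    qed (use i in \<open>auto simp: rho_def\<close>)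
    have e: "(a # map R xs @ W) ! (rho \<pi> ?q i) = (a # map R (permute_list \<pi> xs) @ W) ! i"
    proof (cases "1 \<le> i \<and> i \<le> ?q")
      case True
      have i1: "i - 1 < ?q" using True by linarith
      have pi: "\<pi> (i - 1) < ?q" using i1 by (rule pin)
      have r: "rho \<pi> ?q i = Suc (\<pi> (i - 1))" using True unfolding rho_def by auto
      have lhs: "(a # map R xs @ W) ! Suc (\<pi> (i - 1)) = R (xs ! \<pi> (i - 1))"
        using pi by (simp add: nth_append)
      have i0: "i = Suc (i - 1)" using True by linarith
      have "(a # map R (permute_list \<pi> xs) @ W) ! i = (map R (permute_list \<pi> xs) @ W) ! (i - 1)"
        by (subst i0) simp
      also have "\<dots> = R (xs ! \<pi> (i - 1))"
        using i1 by (simp add: nth_append permute_list_nth[OF \<pi>])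
      finally show ?thesis using r lhs by simp
    next
      case False
      then have "rho \<pi> ?q i = i" unfolding rho_def by auto
      then show ?thesis using False by (auto simp: nth_append nth_Cons')
    qed
    show "mat m m (\<lambda>(i,j). ?B $$ (rho \<pi> ?q i, j)) $$ (i, j) = mat m m (\<lambda>(i,j). ((a # map R (permute_list \<pi> xs) @ W) ! i) j) $$ (i, j)"
      using i j ri e by simp
  qed auto
  ultimately show ?thesis unfolding detm_def by simp
qed

definition cp :: "real \<Rightarrow> real \<Rightarrow> complex" where
  "cp \<rho> t = complex_of_real \<rho> * exp (2 * complex_of_real pi * \<i> * complex_of_real t)"

lemma cp_circ: "circlepath 0 \<rho> t = cp \<rho> t"
  by (simp add: circlepath cp_def)

lemma cp_nz: "\<rho> > 0 \<Longrightarrow> cp \<rho> t \<noteq> 0"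
  by (simp add: cp_def)

lemma cmod_cp: "\<rho> > 0 \<Longrightarrow> cmod (cp \<rho> t) = \<rho>"
  by (simp add: cp_def norm_mult)

lemma continuous_on_cp[continuous_intros]:
  "continuous_on S f \<Longrightarrow> continuous_on S (\<lambda>x. cp \<rho> (f x))"
  unfolding cp_def by (intro continuous_intros)

lemma norm_smult_vec: "norm (c *s (v::complex^'m::finite)) = cmod c * norm v"
  unfolding norm_vec_def by (simp add: norm_mult L2_set_right_distrib)

lemma bl_smult: "bounded_linear (\<lambda>h::complex. h *s (v::complex^'m::finite))"
proof (rule bounded_linear_intro[where K="norm v"])
  show "(x + y) *s v = x *s v + y *s v" for x y by (simp add: Finite_Cartesian_Product.vec_eq_iff algebra_simps)
  show "(r *\<^sub>R x) *s v = r *\<^sub>R (x *s v)" for r x by (simp add: Finite_Cartesian_Product.vec_eq_iff scaleR_conv_of_real[where 'a=complex])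
  show "norm (x *s v) \<le> norm x * norm v" for x by (simp add: norm_smult_vec)
qed

lemma holo_has_deriv:
  assumes "holo_on U g" "y \<in> U"
  shows "(g has_derivative frechet_derivative g (at y)) (at y)"
    and "\<And>c x. frechet_derivative g (at y) (c *s x) = c * frechet_derivative g (at y) x"
proof -
  obtain L where L: "(g has_derivative L) (at y)" "\<forall>c x. L (c *s x) = c * L x"
    using assms unfolding holo_on_def by blast
  have "L = frechet_derivative g (at y)" using L(1) by (rule frechet_derivative_at)
  then show "(g has_derivative frechet_derivative g (at y)) (at y)"
    and "\<And>c x. frechet_derivative g (at y) (c *s x) = c * frechet_derivative g (at y) x"
    using L by auto
qed

lemma holo_cont:
  assumes "holo_on U g"
  shows "continuous_on U g"
  by (rule continuous_at_imp_continuous_on)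
     (use holo_has_deriv(1)[OF assms] has_derivative_continuous in blast)

lemma line_deriv:
  assumes h: "holo_on U g" and z: "y + z *s v \<in> U"
  shows "((\<lambda>z. g (y + z *s v)) has_field_derivative frechet_derivative g (at (y + z *s v)) v) (at z)"
proof -
  have d1: "((\<lambda>z. y + z *s v) has_derivative (\<lambda>h. h *s v)) (at z)"
    using bounded_linear.has_derivative[OF bl_smult[of v] has_derivative_ident, of "at z"]
    by (auto intro!: derivative_eq_intros)
  have d2: "(g has_derivative frechet_derivative g (at (y + z *s v))) (at (y + z *s v))"
    by (rule holo_has_deriv(1)[OF h z])
  have "((\<lambda>z. g (y + z *s v)) has_derivative (\<lambda>h. frechet_derivative g (at (y + z *s v)) (h *s v))) (at z)"
    using has_derivative_compose[OF d1 d2] .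
  moreover have "(\<lambda>h. frechet_derivative g (at (y + z *s v)) (h *s v)) = (*) (frechet_derivative g (at (y + z *s v)) v)"
    using holo_has_deriv(2)[OF h z] by (auto simp: fun_eq_iff)
  ultimately show ?thesis by (simp add: has_field_derivative_def)
qed

lemma local_cauchy:
  fixes g :: "complex^'m::finite \<Rightarrow> complex"
  assumes U: "open U" and h: "holo_on U g" and p: "p \<in> U"
  obtains \<delta> \<rho> where "\<delta> > 0" "\<rho> > 0" "ball p \<delta> \<subseteq> U"
    "\<And>y z. y \<in> ball p \<delta> \<Longrightarrow> cmod z \<le> \<rho> \<Longrightarrow> y + z *s v \<in> U"
    "\<And>y. y \<in> ball p \<delta> \<Longrightarrow> frechet_derivative g (at y) v
        = integral {0..1} (\<lambda>t. g (y + cp \<rho> t *s v) * inverse (cp \<rho> t))"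
proof -
  obtain e where e: "e > 0" "ball p e \<subseteq> U" using U p open_contains_ball by blast
  define \<delta> where "\<delta> = e / 2"
  define \<rho> where "\<rho> = \<delta> / (norm v + 1)"
  have nv: "norm v + 1 > 0" using norm_ge_zero[of v] by linarith
  have dp: "\<delta> > 0" "\<rho> > 0" using e nv by (auto simp: \<delta>_def \<rho>_def)
  have bU: "ball p \<delta> \<subseteq> U" using e by (auto simp: \<delta>_def)
  have inU: "y + z *s v \<in> U" if y: "y \<in> ball p \<delta>" and z: "cmod z \<le> \<rho>" for y z
  proof -
    have "norm (z *s v) \<le> \<rho> * norm v" using z by (simp add: norm_smult_vec mult_right_mono)
    also have "\<dots> \<le> \<delta>"
    proof -
      have "\<rho> * norm v = \<delta> * (norm v / (norm v + 1))" by (simp add: \<rho>_def)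
      also have "\<dots> \<le> \<delta> * 1" using dp nv by (intro mult_left_mono) (auto simp: pos_divide_le_eq)
      finally show ?thesis by simp
    qed
    finally have "norm (z *s v) \<le> \<delta>" .
    then have "dist p (y + z *s v) < e"
      using y dist_triangle[of p "y + z *s v" y] by (auto simp: \<delta>_def dist_norm norm_minus_commute)
    then show ?thesis using e by auto
  qed
  have rep: "frechet_derivative g (at y) v = integral {0..1} (\<lambda>t. g (y + cp \<rho> t *s v) * inverse (cp \<rho> t))"
    if y: "y \<in> ball p \<delta>" for y
  proof -
    let ?\<phi> = "\<lambda>z. g (y + z *s v)"
    have der: "(?\<phi> has_field_derivative frechet_derivative g (at (y + z *s v)) v) (at z)" if "cmod z \<le> \<rho>" for z
      by (rule line_deriv[OF h inU[OF y that]])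
    have cont: "continuous_on (cball 0 \<rho>) ?\<phi>"
    proof (rule continuous_at_imp_continuous_on, intro ballI)
      fix z :: complex assume "z \<in> cball 0 \<rho>"
      then have "cmod z \<le> \<rho>" by simp
      from DERIV_isCont[OF der[OF this]] show "isCont ?\<phi> z" .
    qed
    have hol: "?\<phi> holomorphic_on ball 0 \<rho>"
      unfolding holomorphic_on_def field_differentiable_def
    proof
      fix z :: complex assume "z \<in> ball 0 \<rho>"
      then have "cmod z \<le> \<rho>" by simp
      from has_field_derivative_at_within[OF der[OF this]]
      show "\<exists>f'. (?\<phi> has_field_derivative f') (at z within ball 0 \<rho>)" by blast
    qed
    have c0: "0 \<in> ball (0::complex) \<rho>" using dp by simp
    have d1: "(?\<phi> has_field_derivative (1 / (2 * of_real pi * \<i>) * contour_integral (circlepath 0 \<rho>) (\<lambda>u. ?\<phi> u / (u - 0)^2))) (at 0)"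
      by (rule Cauchy_derivative_integral_circlepath(2)[OF cont hol c0])
    have d2: "(?\<phi> has_field_derivative frechet_derivative g (at y) v) (at 0)"
      using der[of 0] dp by simp
    have "frechet_derivative g (at y) v = 1 / (2 * of_real pi * \<i>) * contour_integral (circlepath 0 \<rho>) (\<lambda>u. ?\<phi> u / (u - 0)^2)"
      using DERIV_unique[OF d2 d1] .
    also have "contour_integral (circlepath 0 \<rho>) (\<lambda>u. ?\<phi> u / (u - 0)^2)
        = integral {0..1} (\<lambda>t. (2 * of_real pi * \<i>) * (g (y + cp \<rho> t *s v) * inverse (cp \<rho> t)))"
      unfolding contour_integral_integral
    proof (rule integral_cong)
      fix t assume "t \<in> {0..1::real}"
      have nz: "cp \<rho> t \<noteq> 0" using dp(2) by (rule cp_nz)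
      have vd: "vector_derivative (circlepath 0 \<rho>) (at t) = 2 * of_real pi * \<i> * cp \<rho> t"
        by (simp add: vector_derivative_circlepath cp_def)
      show "?\<phi> (circlepath 0 \<rho> t) / (circlepath 0 \<rho> t - 0)\<^sup>2 * vector_derivative (circlepath 0 \<rho>) (at t) =
         2 * complex_of_real pi * \<i> * (g (y + cp \<rho> t *s v) * inverse (cp \<rho> t))"
        unfolding vd cp_circ using nz by (simp add: field_simps power2_eq_square)
    qed
    also have "1 / (2 * of_real pi * \<i>) * \<dots> = integral {0..1} (\<lambda>t. g (y + cp \<rho> t *s v) * inverse (cp \<rho> t))"
      by simp
    finally show ?thesis .
  qed
  show ?thesis
    by (rule that[OF dp(1) dp(2) bU inU rep]) auto
qed


lemma cont_shift:
  fixes g :: "complex^'m::finite \<Rightarrow> complex"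
  assumes cg: "continuous_on U g"
    and inU: "\<And>y t. y \<in> S \<Longrightarrow> t \<in> cbox 0 1 \<Longrightarrow> y + cp \<rho> t *s v \<in> U"
  shows "continuous_on (S \<times> cbox 0 (1::real)) (\<lambda>(y, t). g (y + cp \<rho> t *s v))"
proof -
  have c1: "continuous_on (S \<times> cbox 0 (1::real)) (\<lambda>z. fst z + cp \<rho> (snd z) *s v)"
  proof -
    have a: "continuous_on (S \<times> cbox 0 (1::real)) (\<lambda>z. cp \<rho> (snd z))"
      by (rule continuous_on_cp[OF continuous_on_snd[OF continuous_on_id]])
    have b: "continuous_on (S \<times> cbox 0 (1::real)) (\<lambda>z. cp \<rho> (snd z) *s v)"
      by (rule bounded_linear.continuous_on[OF bl_smult a])
    show ?thesis
      by (rule continuous_on_add[OF continuous_on_fst[OF continuous_on_id] b])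
  qed
  have "continuous_on (S \<times> cbox 0 (1::real)) (\<lambda>z. g (fst z + cp \<rho> (snd z) *s v))"
    by (rule continuous_on_compose2[OF cg c1]) (use inU in auto)
  then show ?thesis by (simp add: case_prod_beta)
qed

lemma deriv_cont:
  fixes g :: "complex^'m::finite \<Rightarrow> complex"
  assumes U: "open U" and h: "holo_on U g"
  shows "continuous_on U (\<lambda>y. frechet_derivative g (at y) b)"
proof (rule continuous_at_imp_continuous_on, intro ballI)
  fix p assume p: "p \<in> U"
  obtain \<delta> \<rho> where dp: "\<delta> > 0" "\<rho> > 0" "ball p \<delta> \<subseteq> U"
    and inU: "\<And>y z. y \<in> ball p \<delta> \<Longrightarrow> cmod z \<le> \<rho> \<Longrightarrow> y + z *s b \<in> U"
    and rep: "\<And>y. y \<in> ball p \<delta> \<Longrightarrow> frechet_derivative g (at y) b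
        = integral {0..1} (\<lambda>t. g (y + cp \<rho> t *s b) * inverse (cp \<rho> t))"
    by (rule local_cauchy[OF U h p, of b]) iprover
  have inU': "y + cp \<rho> t *s b \<in> U" if "y \<in> ball p \<delta>" for y t
    using inU[OF that] cmod_cp[OF dp(2)] by simp
  have c: "continuous_on (ball p \<delta> \<times> cbox 0 (1::real)) (\<lambda>(y, t). g (y + cp \<rho> t *s b) * inverse (cp \<rho> t))"
  proof -
    have c1: "continuous_on (ball p \<delta> \<times> cbox 0 (1::real)) (\<lambda>(y, t). g (y + cp \<rho> t *s b))"
      by (rule cont_shift[OF holo_cont[OF h]]) (use inU' in auto)
    have c2: "continuous_on (ball p \<delta> \<times> cbox 0 (1::real)) (\<lambda>z. inverse (cp \<rho> (snd z)))"
      by (intro continuous_intros) (use cp_nz[OF dp(2)] in auto)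
    have "continuous_on (ball p \<delta> \<times> cbox 0 (1::real)) (\<lambda>z. (\<lambda>(y, t). g (y + cp \<rho> t *s b)) z * inverse (cp \<rho> (snd z)))"
      by (rule continuous_on_mult[OF c1 c2])
    then show ?thesis by (simp add: case_prod_beta)
  qed
  have "continuous_on (ball p \<delta>) (\<lambda>y. integral (cbox 0 1) (\<lambda>t. g (y + cp \<rho> t *s b) * inverse (cp \<rho> t)))"
    by (rule integral_continuous_on_param[OF c])
  then have "continuous_on (ball p \<delta>) (\<lambda>y. frechet_derivative g (at y) b)"
    by (rule continuous_on_eq) (use rep in \<open>auto simp: cbox_interval\<close>)
  then show "isCont (\<lambda>y. frechet_derivative g (at y) b) p"
    using continuous_on_eq_continuous_at[OF open_ball] centre_in_ball dp(1) by blast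
qed

lemma holo_deriv_holo:
  fixes g :: "complex^'m::finite \<Rightarrow> complex"
  assumes U: "open U" and h: "holo_on U g"
  shows "holo_on U (\<lambda>y. frechet_derivative g (at y) v)"
  unfolding holo_on_def
proof
  fix p assume p: "p \<in> U"
  obtain \<delta> \<rho> where dp: "\<delta> > 0" "\<rho> > 0" "ball p \<delta> \<subseteq> U"
    and inU: "\<And>y z. y \<in> ball p \<delta> \<Longrightarrow> cmod z \<le> \<rho> \<Longrightarrow> y + z *s v \<in> U"
    and rep: "\<And>y. y \<in> ball p \<delta> \<Longrightarrow> frechet_derivative g (at y) v
        = integral {0..1} (\<lambda>t. g (y + cp \<rho> t *s v) * inverse (cp \<rho> t))"
    by (rule local_cauchy[OF U h p, of v]) iprover
  define S where "S = ball p \<delta>"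
  define k where "k t = inverse (cp \<rho> t)" for t
  let ?D = "\<lambda>z. frechet_derivative g (at z)"
  have inU': "y + cp \<rho> t *s v \<in> U" if "y \<in> S" for y t
    using inU[of y "cp \<rho> t"] that cmod_cp[OF dp(2)] by (simp add: S_def)
  have blD: "bounded_linear (\<lambda>w. ?D z w * c)" if "z \<in> U" for z c
    using bounded_linear_compose[OF bounded_linear_mult_left has_derivative_bounded_linear[OF holo_has_deriv(1)[OF h that]]]
    by (simp add: o_def)
  define fx where "fx y t = Blinfun (\<lambda>w. ?D (y + cp \<rho> t *s v) w * k t)" for y t
  have fx_app: "blinfun_apply (fx y t) = (\<lambda>w. ?D (y + cp \<rho> t *s v) w * k t)" if "y \<in> S" for y t
    unfolding fx_def using blD[OF inU'[OF that]] by (simp add: bounded_linear_Blinfun_apply)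
  have contD: "continuous_on U (\<lambda>y. ?D y b)" for b
    by (rule deriv_cont[OF U h])
  have ck: "continuous_on (S \<times> cbox 0 (1::real)) (\<lambda>z. k (snd z))"
    unfolding k_def by (intro continuous_intros) (use cp_nz[OF dp(2)] in auto)
  have cont_fx: "continuous_on (S \<times> cbox 0 1) (\<lambda>(x, t). fx x t)"
  proof -
    have cb: "continuous_on (S \<times> cbox 0 1) (\<lambda>z. blinfun_apply ((\<lambda>(x, t). fx x t) z) b)" for b
    proof -
      have c1: "continuous_on (S \<times> cbox 0 (1::real)) (\<lambda>(y, t). ?D (y + cp \<rho> t *s v) b)"
        by (rule cont_shift[OF contD]) (use inU' in auto)
      have "continuous_on (S \<times> cbox 0 (1::real)) (\<lambda>z. (\<lambda>(y, t). ?D (y + cp \<rho> t *s v) b) z * k (snd z))"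
        by (rule continuous_on_mult[OF c1 ck])
      then show ?thesis
        by (rule continuous_on_eq) (auto simp: fx_app)
    qed
    show ?thesis
      unfolding continuous_on_eq_continuous_within
    proof
      fix z assume z: "z \<in> S \<times> cbox 0 (1::real)"
      show "continuous (at z within S \<times> cbox 0 (1::real)) (\<lambda>(x, t). fx x t)"
        by (rule continuous_blinfun_componentwiseI1)
           (use cb z in \<open>auto simp: continuous_on_eq_continuous_within\<close>)
    qed
  qed
  have pS: "p \<in> S" using dp by (simp add: S_def)
  have der_f: "((\<lambda>x. g (x + cp \<rho> t *s v) * k t) has_derivative blinfun_apply (fx x t)) (at x within S)"
    if x: "x \<in> S" and t: "t \<in> cbox 0 1" for x t
  proof -
    have d1: "((\<lambda>x. x + cp \<rho> t *s v) has_derivative (\<lambda>h. h)) (at x within S)"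
      by (auto intro!: derivative_eq_intros)
    have d2: "(g has_derivative ?D (x + cp \<rho> t *s v)) (at (x + cp \<rho> t *s v))"
      by (rule holo_has_deriv(1)[OF h inU'[OF x]])
    have "((\<lambda>x. g (x + cp \<rho> t *s v) * k t) has_derivative (\<lambda>h. ?D (x + cp \<rho> t *s v) h * k t)) (at x within S)"
      by (rule has_derivative_mult_left[OF has_derivative_compose[OF d1 d2]])
    then show ?thesis using fx_app[OF x] by simp
  qed
  have int_f: "(\<lambda>t. g (x + cp \<rho> t *s v) * k t) integrable_on cbox 0 1" if x: "x \<in> S" for x
  proof (rule integrable_continuous)
    have c1: "continuous_on (S \<times> cbox 0 (1::real)) (\<lambda>(y, t). g (y + cp \<rho> t *s v))"
      by (rule cont_shift[OF holo_cont[OF h]]) (use inU' in auto)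
    have "continuous_on (S \<times> cbox 0 (1::real)) (\<lambda>z. (\<lambda>(y, t). g (y + cp \<rho> t *s v)) z * k (snd z))"
      by (rule continuous_on_mult[OF c1 ck])
    then have "continuous_on (cbox 0 1) (\<lambda>t. (\<lambda>z. (\<lambda>(y, t). g (y + cp \<rho> t *s v)) z * k (snd z)) (x, t))"
      by (rule continuous_on_compose2[where f="\<lambda>t. (x, t)"]) (use x in \<open>auto intro!: continuous_intros\<close>)
    then show "continuous_on (cbox 0 1) (\<lambda>t. g (x + cp \<rho> t *s v) * k t)" by simp
  qed
  have L: "((\<lambda>x. integral (cbox 0 1) (\<lambda>t. g (x + cp \<rho> t *s v) * k t)) has_derivative integral (cbox 0 1) (fx p)) (at p within S)"
    by (rule leibniz_rule[OF der_f int_f cont_fx pS]) (auto simp: S_def)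
  have L': "((\<lambda>x. integral (cbox 0 1) (\<lambda>t. g (x + cp \<rho> t *s v) * k t)) has_derivative integral (cbox 0 1) (fx p)) (at p)"
    using L at_within_open[OF pS] by (simp add: S_def)
  have L'': "((\<lambda>y. ?D y v) has_derivative integral (cbox 0 1) (fx p)) (at p)"
    by (rule has_derivative_transform_within_open[OF L' _ pS]) (auto simp: S_def rep k_def cbox_interval)
  have intfx: "fx p integrable_on cbox 0 1"
  proof (rule integrable_continuous)
    show "continuous_on (cbox 0 1) (fx p)"
    proof -
      have a: "continuous_on (cbox 0 1) (Pair p :: real \<Rightarrow> _)" by (intro continuous_intros)
      have b: "Pair p ` cbox 0 (1::real) \<subseteq> S \<times> cbox 0 1" using pS by auto
      show ?thesis using continuous_on_compose2[OF cont_fx a b] by simp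
    qed
  qed
  have lin: "blinfun_apply (integral (cbox 0 1) (fx p)) (c *s x) = c * blinfun_apply (integral (cbox 0 1) (fx p)) x" for c x
  proof -
    have "blinfun_apply (integral (cbox 0 1) (fx p)) (c *s x) = integral (cbox 0 1) (\<lambda>t. blinfun_apply (fx p t) (c *s x))"
      by (rule blinfun_apply_integral[OF intfx])
    also have "\<dots> = integral (cbox 0 1) (\<lambda>t. c * blinfun_apply (fx p t) x)"
      using holo_has_deriv(2)[OF h inU'[OF pS]] by (simp add: fx_app[OF pS] mult.assoc)
    also have "\<dots> = c * integral (cbox 0 1) (\<lambda>t. blinfun_apply (fx p t) x)" by simp
    also have "\<dots> = c * blinfun_apply (integral (cbox 0 1) (fx p)) x"
      using blinfun_apply_integral[OF intfx, of x] by simp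
    finally show ?thesis .
  qed
  show "\<exists>L. ((\<lambda>y. ?D y v) has_derivative L) (at p) \<and> (\<forall>c x. L (c *s x) = c * L x)"
    using L'' lin by blast
qed

lemma axis_scale: "axis k c = c *s axis k (1::complex)"
  by (simp add: Finite_Cartesian_Product.vec_eq_iff axis_def)

lemma wz_of: "(g has_derivative L) (at p) \<Longrightarrow>
  wz idx j g p = (L (axis (idx j) 1) - \<i> * L (axis (idx j) \<i>)) / 2"
  unfolding wz_def using frechet_derivative_at[of g L p] by simp

lemma wzb_of: "(g has_derivative L) (at p) \<Longrightarrow>
  wzb idx j g p = (L (axis (idx j) 1) + \<i> * L (axis (idx j) \<i>)) / 2"
  unfolding wzb_def using frechet_derivative_at[of g L p] by simp

lemma holo_lin_i:
  assumes "holo_on U g" "y \<in> U"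
  shows "frechet_derivative g (at y) (axis k \<i>) = \<i> * frechet_derivative g (at y) (axis k 1)"
  using holo_has_deriv(2)[OF assms, of \<i> "axis k 1"] by (simp add: axis_scale[of k \<i>])

lemma wz_holo:
  assumes "holo_on U g" "y \<in> U"
  shows "wz idx j g y = frechet_derivative g (at y) (axis (idx j) 1)"
    and "wzb idx j g y = 0"
  using wz_of[OF holo_has_deriv(1)[OF assms], of idx j] wzb_of[OF holo_has_deriv(1)[OF assms], of idx j]
    holo_lin_i[OF assms, of "idx j"]
  by (simp_all add: field_simps)

lemma wz_cnj_holo:
  assumes "holo_on U g" "y \<in> U"
  shows "wz idx j (\<lambda>x. cnj (g x)) y = 0"
    and "wzb idx j (\<lambda>x. cnj (g x)) y = cnj (wz idx j g y)"
proof -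
  have d: "((\<lambda>x. cnj (g x)) has_derivative (\<lambda>v. cnj (frechet_derivative g (at y) v))) (at y)"
    by (rule has_derivative_cnj[OF holo_has_deriv(1)[OF assms]])
  show "wz idx j (\<lambda>x. cnj (g x)) y = 0"
    using wz_of[OF d, of idx j] holo_lin_i[OF assms, of "idx j"] by (simp add: field_simps)
  show "wzb idx j (\<lambda>x. cnj (g x)) y = cnj (wz idx j g y)"
    using wzb_of[OF d, of idx j] holo_lin_i[OF assms, of "idx j"] wz_holo(1)[OF assms, of idx j]
    by (simp add: field_simps)
qed

lemma r_has_deriv:
  fixes f :: "nat \<Rightarrow> complex^'m::finite \<Rightarrow> complex"
  assumes "\<And>\<mu>. \<mu> < N \<Longrightarrow> (f \<mu> has_derivative D \<mu>) (at y)"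
  shows "((\<lambda>x. x $ i + cnj (x $ i) + (\<Sum>\<mu><N. f \<mu> x * cnj (f \<mu> x))) has_derivative
     (\<lambda>v. v $ i + cnj (v $ i) + (\<Sum>\<mu><N. f \<mu> y * cnj (D \<mu> v) + D \<mu> v * cnj (f \<mu> y)))) (at y)"
proof -
  have v: "((\<lambda>x::complex^'m. x $ i) has_derivative (\<lambda>v. v $ i)) (at y)"
    by (rule bounded_linear.has_derivative[OF bounded_linear_vec_nth has_derivative_ident])
  have s: "((\<lambda>x. \<Sum>\<mu><N. f \<mu> x * cnj (f \<mu> x)) has_derivative
      (\<lambda>v. \<Sum>\<mu><N. f \<mu> y * cnj (D \<mu> v) + D \<mu> v * cnj (f \<mu> y))) (at y)"
    by (rule has_derivative_sum) (use assms in \<open>auto intro!: has_derivative_mult has_derivative_cnj\<close>)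
  show ?thesis
    by (rule has_derivative_add[OF has_derivative_add[OF v has_derivative_cnj[OF v]] s])
qed

lemma idx_comp:
  fixes n j :: nat
  assumes "inj_on idx {..n}" "j \<le> n"
  shows "axis (idx j) c $ idx n = (if j = n then c else 0)"
proof (cases "j = n")
  case False
  have jn: "j \<in> {..n}" "n \<in> {..n}" using assms(2) by auto
  have "idx j \<noteq> idx n"
  proof
    assume "idx j = idx n"
    from inj_onD[OF assms(1) this jn] False show False by simp
  qed
  then show ?thesis using False by (simp add: axis_def)
qed (simp add: axis_def)

lemma r_first:
  fixes f :: "nat \<Rightarrow> complex^'m::finite \<Rightarrow> complex" and n j :: nat
  assumes inj: "inj_on idx {..n}" and hf: "\<And>\<mu>. \<mu> < N \<Longrightarrow> holo_on U (f \<mu>)" and y: "y \<in> U"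
    and j: "j \<le> n"
    and r: "r = (\<lambda>x. x $ idx n + cnj (x $ idx n) + (\<Sum>\<mu><N. f \<mu> x * cnj (f \<mu> x)))"
  shows "wz idx j r y = (if j = n then 1 else 0) + (\<Sum>\<mu><N. cnj (f \<mu> y) * wz idx j (f \<mu>) y)"
    and "wzb idx j r y = (if j = n then 1 else 0) + (\<Sum>\<mu><N. f \<mu> y * cnj (wz idx j (f \<mu>) y))"
proof -
  let ?D = "\<lambda>\<mu>. frechet_derivative (f \<mu>) (at y)"
  let ?e = "axis (idx j) (1::complex)"
  have d: "(r has_derivative (\<lambda>v. v $ idx n + cnj (v $ idx n) + (\<Sum>\<mu><N. f \<mu> y * cnj (?D \<mu> v) + ?D \<mu> v * cnj (f \<mu> y)))) (at y)"
    unfolding r by (rule r_has_deriv) (use holo_has_deriv(1)[OF hf y] in auto)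
  have li: "\<And>\<mu>. \<mu> < N \<Longrightarrow> ?D \<mu> (axis (idx j) \<i>) = \<i> * ?D \<mu> ?e"
    using holo_lin_i[OF hf y] by blast
  have wzf: "\<And>\<mu>. \<mu> < N \<Longrightarrow> wz idx j (f \<mu>) y = ?D \<mu> ?e"
    using wz_holo(1)[OF hf y] by blast
  have c1: "axis (idx j) c $ idx n = (if j = n then c else 0)" for c
    by (rule idx_comp[OF inj j])
  have s1: "(\<Sum>\<mu><N. f \<mu> y * cnj (?D \<mu> ?e) + ?D \<mu> ?e * cnj (f \<mu> y))
       - \<i> * (\<Sum>\<mu><N. f \<mu> y * cnj (?D \<mu> (axis (idx j) \<i>)) + ?D \<mu> (axis (idx j) \<i>) * cnj (f \<mu> y))
     = 2 * (\<Sum>\<mu><N. cnj (f \<mu> y) * wz idx j (f \<mu>) y)"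
    by (simp add: li wzf sum_distrib_left sum_subtractf[symmetric] algebra_simps)
  have s2: "(\<Sum>\<mu><N. f \<mu> y * cnj (?D \<mu> ?e) + ?D \<mu> ?e * cnj (f \<mu> y))
       + \<i> * (\<Sum>\<mu><N. f \<mu> y * cnj (?D \<mu> (axis (idx j) \<i>)) + ?D \<mu> (axis (idx j) \<i>) * cnj (f \<mu> y))
     = 2 * (\<Sum>\<mu><N. f \<mu> y * cnj (wz idx j (f \<mu>) y))"
    by (simp add: li wzf sum_distrib_left sum.distrib[symmetric] algebra_simps)
  show "wz idx j r y = (if j = n then 1 else 0) + (\<Sum>\<mu><N. cnj (f \<mu> y) * wz idx j (f \<mu>) y)"
    using s1 unfolding wz_of[OF d] c1 by (auto simp: field_simps)
  show "wzb idx j r y = (if j = n then 1 else 0) + (\<Sum>\<mu><N. f \<mu> y * cnj (wz idx j (f \<mu>) y))"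
    using s2 unfolding wzb_of[OF d] c1 by (auto simp: field_simps)
qed


lemma r_second:
  fixes f :: "nat \<Rightarrow> complex^'m::finite \<Rightarrow> complex" and n j l :: nat
  assumes U: "open U" and inj: "inj_on idx {..n}" and hf: "\<And>\<mu>. \<mu> < N \<Longrightarrow> holo_on U (f \<mu>)"
    and p: "p \<in> U" and j: "j \<le> n" and l: "l \<le> n"
    and r: "r = (\<lambda>x. x $ idx n + cnj (x $ idx n) + (\<Sum>\<mu><N. f \<mu> x * cnj (f \<mu> x)))"
  shows "wz idx j (wzb idx l r) p = (\<Sum>\<mu><N. wz idx j (f \<mu>) p * cnj (wz idx l (f \<mu>) p))"
proof -
  define G where "G \<mu> = (\<lambda>y. frechet_derivative (f \<mu>) (at y) (axis (idx l) 1))" for \<mu>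
  have hG: "\<And>\<mu>. \<mu> < N \<Longrightarrow> holo_on U (G \<mu>)"
    unfolding G_def by (rule holo_deriv_holo[OF U hf])
  define h where "h y = (if l = n then 1 else 0) + (\<Sum>\<mu><N. f \<mu> y * cnj (G \<mu> y))" for y
  have eq: "h y = wzb idx l r y" if y: "y \<in> U" for y
  proof -
    have e1: "wzb idx l r y = (if l = n then 1 else 0) + (\<Sum>\<mu><N. f \<mu> y * cnj (wz idx l (f \<mu>) y))"
      by (rule r_first(2)[OF inj hf y l r])
    have e2: "(\<Sum>\<mu><N. f \<mu> y * cnj (wz idx l (f \<mu>) y)) = (\<Sum>\<mu><N. f \<mu> y * cnj (G \<mu> y))"
      by (rule sum.cong) (simp_all add: wz_holo(1)[OF hf y] G_def)
    show ?thesis using e1 e2 by (simp add: h_def)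
  qed
  let ?D = "\<lambda>\<mu>. frechet_derivative (f \<mu>) (at p)"
  let ?D' = "\<lambda>\<mu>. frechet_derivative (G \<mu>) (at p)"
  have dh: "(h has_derivative (\<lambda>v. 0 + (\<Sum>\<mu><N. f \<mu> p * cnj (?D' \<mu> v) + ?D \<mu> v * cnj (G \<mu> p)))) (at p)"
    unfolding h_def
    by (intro has_derivative_add has_derivative_const has_derivative_sum has_derivative_mult has_derivative_cnj)
       (use holo_has_deriv(1)[OF hf p] holo_has_deriv(1)[OF hG p] in auto)
  have d2: "(wzb idx l r has_derivative (\<lambda>v. 0 + (\<Sum>\<mu><N. f \<mu> p * cnj (?D' \<mu> v) + ?D \<mu> v * cnj (G \<mu> p)))) (at p)"
    by (rule has_derivative_transform_within_open[OF dh U p]) (rule eq)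
  let ?e = "axis (idx j) (1::complex)"
  have li: "\<And>\<mu>. \<mu> < N \<Longrightarrow> ?D \<mu> (axis (idx j) \<i>) = \<i> * ?D \<mu> ?e"
    using holo_lin_i[OF hf p] by blast
  have li': "\<And>\<mu>. \<mu> < N \<Longrightarrow> ?D' \<mu> (axis (idx j) \<i>) = \<i> * ?D' \<mu> ?e"
    using holo_lin_i[OF hG p] by blast
  have wzf: "\<And>\<mu>. \<mu> < N \<Longrightarrow> wz idx j (f \<mu>) p = ?D \<mu> ?e"
    using wz_holo(1)[OF hf p] by blast
  have wzl: "\<And>\<mu>. \<mu> < N \<Longrightarrow> wz idx l (f \<mu>) p = G \<mu> p"
    using wz_holo(1)[OF hf p] by (simp add: G_def)
  have s1: "(\<Sum>\<mu><N. f \<mu> p * cnj (?D' \<mu> ?e) + ?D \<mu> ?e * cnj (G \<mu> p))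
       - \<i> * (\<Sum>\<mu><N. f \<mu> p * cnj (?D' \<mu> (axis (idx j) \<i>)) + ?D \<mu> (axis (idx j) \<i>) * cnj (G \<mu> p))
     = 2 * (\<Sum>\<mu><N. wz idx j (f \<mu>) p * cnj (wz idx l (f \<mu>) p))"
    by (simp add: li li' wzf wzl sum_distrib_left sum_subtractf[symmetric] algebra_simps)
  show ?thesis
    using s1 unfolding wz_of[OF d2] by (auto simp: field_simps)
qed

lemma one_form_sum:
  "(\<lambda>K. \<Sum>j<m. a j * gen (s + j) K) = one_form (\<lambda>t. if s \<le> t \<and> t < s + m then a (t - s) else 0)"
proof (rule ext)
  fix K :: "nat set"
  show "(\<Sum>j<m. a j * gen (s + j) K) = one_form (\<lambda>t. if s \<le> t \<and> t < s + m then a (t - s) else 0) K"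
  proof (cases "card K = 1")
    case True
    then obtain x where K: "K = {x}" by (auto simp: card_Suc_eq)
    have "(\<Sum>j<m. a j * gen (s + j) K) = (\<Sum>j<m. if j = x - s \<and> s \<le> x then a j else 0)"
      by (rule sum.cong[OF refl]) (auto simp: gen_def K)
    also have "\<dots> = (if s \<le> x \<and> x < s + m then a (x - s) else 0)"
    proof (cases "s \<le> x")
      case True
      then have "(\<Sum>j<m. if j = x - s \<and> s \<le> x then a j else 0) = (\<Sum>j<m. if j = x - s then a j else 0)"
        by simp
      also have "\<dots> = (if x - s \<in> {..<m} then a (x - s) else 0)" by (rule sum.delta) simp
      finally show ?thesis using True by auto
    qed simp
    finally show ?thesis using K by (simp add: one_form_def)
  next
    case False
    then have "\<And>j. gen (s + j) K = 0" by (auto simp: gen_def)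
    then show ?thesis using False by (simp add: one_form_def)
  qed
qed

lemma one_form_sum0: "(\<lambda>K. \<Sum>j<m. a j * gen j K) = one_form (\<lambda>t. if t < m then a t else 0)"
proof -
  have e: "(\<lambda>t::nat. if 0 \<le> t \<and> t < 0 + m then a (t - 0) else 0) = (\<lambda>t. if t < m then a t else 0)"
    by (rule ext) simp
  have e2: "(\<lambda>K. \<Sum>j<m. a j * gen (0 + j) K) = (\<lambda>K. \<Sum>j<m. a j * gen j K)" by simp
  show ?thesis using one_form_sum[where a=a and m=m and s=0] unfolding e e2 .
qed

lemma one_form_hol: "one_form (hol m a) = (\<lambda>K. \<Sum>j<m. a j * gen j K)"
  using one_form_sum0[where a=a and m=m] by (simp add: hol_def[abs_def])

lemma one_form_ahol: "one_form (ahol m a) = (\<lambda>K. \<Sum>j<m. cnj (a j) * gen (m + j) K)"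
proof -
  have "(\<lambda>t. if m \<le> t \<and> t < m + m then cnj (a (t - m)) else 0) = ahol m a"
    by (simp add: ahol_def[abs_def] mult_2)
  then show ?thesis using one_form_sum[where a="\<lambda>j. cnj (a j)" and m=m and s=m] by simp
qed

lemma bigwedge_wl':
  assumes "\<And>l. l < k \<Longrightarrow> feq (F l) (wl (P l))"
  shows "feq (bigwedge F k) (wl (concat (map P [0..<k])))"
  using assms
proof (induction k)
  case 0
  then show ?case by simp
next
  case (Suc k)
  have "feq (bigwedge F (Suc k)) (wedge (wl (concat (map P [0..<k]))) (wl (P k)))"
    using feq_wedge[OF Suc.IH Suc.prems[of k]] Suc.prems by simp
  then show ?case by (simp add: feq_def wl_append)
qed

lemma detn_cong:
  assumes "\<And>i j. i < m \<Longrightarrow> j < m \<Longrightarrow> A i j = B i j"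
  shows "detn m A = detn m B"
  unfolding detn_def
proof (rule sum.cong[OF refl])
  fix p assume "p \<in> {p. p permutes {..<m}}"
  then have p: "p permutes {..<m}" by simp
  have "(\<Prod>i<m. A i (p i)) = (\<Prod>i<m. B i (p i))"
  proof (rule prod.cong[OF refl])
    fix i assume i: "i \<in> {..<m}"
    then have "p i \<in> {..<m}" using permutes_in_image[OF p] by blast
    then show "A i (p i) = B i (p i)" using i assms by simp
  qed
  then show "of_int (sign p) * (\<Prod>i<m. A i (p i)) = of_int (sign p) * (\<Prod>i<m. B i (p i))" by simp
qed

lemma cnj_signof: "cnj (signof p :: complex) = signof p"
  by simp


lemma main_eval:
  fixes idx :: "nat \<Rightarrow> 'm::finite" and f G :: "nat \<Rightarrow> complex^'m \<Rightarrow> complex" and n k N :: nat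
  assumes kn: "k \<le> n" and bij: "bij_betw idx {..n} UNIV" and U: "open U"
    and hf: "\<And>\<mu>. \<mu> < N \<Longrightarrow> holo_on U (f \<mu>)" and hG: "\<And>l. l < k \<Longrightarrow> holo_on U (G l)" and p: "p \<in> U"
    and r: "r = (\<lambda>x. x $ idx n + cnj (x $ idx n) + (\<Sum>\<mu><N. f \<mu> x * cnj (f \<mu> x)))"
  shows "wedge (wedge (wedge (del_form (Suc n) idx r p) (delbar_form (Suc n) idx r p))
                  (wedge_pow (ddbar_form (Suc n) idx r p) (n - k)))
           (bigwedge (\<lambda>l. wedge (d_form (Suc n) idx (G l) p) (d_form (Suc n) idx (\<lambda>x. cnj (G l x)) p)) k)
           {..<2 * Suc n}
     = (signof (blk (Suc n)) * of_nat (fact (n - k))) *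
       complex_of_real (\<Sum>S\<in>{S. S \<subseteq> {..<N} \<and> card S = n - k}.
          cmod (jac idx (map f (sorted_list_of_set S) @ map G [0..<k]) p
             + (\<Sum>\<mu><N. jac idx ((map f (sorted_list_of_set S) @ map G [0..<k]) @ [f \<mu>]) p * cnj (f \<mu> p))) ^ 2)"
proof -
  define m where "m = Suc n"
  define q where "q = n - k"
  have inj: "inj_on idx {..n}" using bij by (rule bij_betw_imp_inj_on)
  define rw where "rw h = (\<lambda>j. wz idx j h p)" for h
  define u where "u = (\<lambda>j. (if j = n then 1 else 0) + (\<Sum>\<mu><N. cnj (f \<mu> p) * rw (f \<mu>) j))"
  define PR where "PR a = [one_form (hol m a), one_form (ahol m a)]" for a
  define rows where "rows t = u # map rw (map f t @ map G [0..<k])" for t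
  let ?T = "{t. length t = q \<and> set t \<subseteq> {..<N}}"
  have D: "del_form m idx r p = one_form (hol m u)"
  proof -
    have "del_form m idx r p = one_form (\<lambda>t. if t < m then wz idx t r p else 0)"
      using one_form_sum0[where a="\<lambda>j. wz idx j r p" and m=m] by (simp add: del_form_def)
    also have "(\<lambda>t. if t < m then wz idx t r p else 0) = hol m u"
    proof (rule ext)
      fix t show "(if t < m then wz idx t r p else 0) = hol m u t"
        using r_first(1)[OF inj hf p _ r, of t] by (auto simp: hol_def u_def rw_def m_def)
    qed
    finally show ?thesis .
  qed
  have Db: "delbar_form m idx r p = one_form (ahol m u)"
  proof -
    have "delbar_form m idx r p = one_form (\<lambda>t. if m \<le> t \<and> t < m + m then wzb idx (t - m) r p else 0)"
      using one_form_sum[where a="\<lambda>j. wzb idx j r p" and m=m and s=m] by (simp add: delbar_form_def)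
    also have "(\<lambda>t. if m \<le> t \<and> t < m + m then wzb idx (t - m) r p else 0) = ahol m u"
    proof (rule ext)
      fix t show "(if m \<le> t \<and> t < m + m then wzb idx (t - m) r p else 0) = ahol m u t"
        using r_first(2)[OF inj hf p _ r, of "t - m"] by (auto simp: ahol_def u_def rw_def m_def)
    qed
    finally show ?thesis .
  qed
  have DG: "d_form m idx (G l) p = one_form (hol m (rw (G l)))" if l: "l < k" for l
  proof -
    have "delbar_form m idx (G l) p = (\<lambda>K. 0)"
      unfolding delbar_form_def using wz_holo(2)[OF hG[OF l] p] by simp
    moreover have "del_form m idx (G l) p = one_form (hol m (rw (G l)))"
      using one_form_sum0[where a="\<lambda>j. wz idx j (G l) p" and m=m]
      by (simp add: del_form_def hol_def[abs_def] rw_def)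
    ultimately show ?thesis by (simp add: d_form_def)
  qed
  have DGb: "d_form m idx (\<lambda>x. cnj (G l x)) p = one_form (ahol m (rw (G l)))" if l: "l < k" for l
  proof -
    have "del_form m idx (\<lambda>x. cnj (G l x)) p = (\<lambda>K. 0)"
      unfolding del_form_def using wz_cnj_holo(1)[OF hG[OF l] p] by simp
    moreover have "delbar_form m idx (\<lambda>x. cnj (G l x)) p = one_form (ahol m (rw (G l)))"
    proof -
      have "delbar_form m idx (\<lambda>x. cnj (G l x)) p = one_form (\<lambda>t. if m \<le> t \<and> t < m + m then wzb idx (t - m) (\<lambda>x. cnj (G l x)) p else 0)"
        using one_form_sum[where a="\<lambda>j. wzb idx j (\<lambda>x. cnj (G l x)) p" and m=m and s=m] by (simp add: delbar_form_def)
      also have "(\<lambda>t. if m \<le> t \<and> t < m + m then wzb idx (t - m) (\<lambda>x. cnj (G l x)) p else 0) = ahol m (rw (G l))"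
        by (rule ext) (simp add: ahol_def rw_def wz_cnj_holo(2)[OF hG[OF l] p] mult_2)
      finally show ?thesis .
    qed
    ultimately show ?thesis by (simp add: d_form_def)
  qed
  have P: "feq (ddbar_form m idx r p) (\<lambda>K. \<Sum>\<mu><N. wl (PR (rw (f \<mu>))) K)"
    unfolding feq_def
  proof (intro allI impI)
    fix K :: "nat set" assume K: "finite K"
    let ?W = "\<lambda>j l. wedge (gen j) (gen (m + l)) K"
    have "(\<Sum>\<mu><N. wl (PR (rw (f \<mu>))) K) = (\<Sum>\<mu><N. wedge (one_form (hol m (rw (f \<mu>)))) (one_form (ahol m (rw (f \<mu>)))) K)"
      using wl_pair K by (simp add: PR_def feq_def)
    also have "\<dots> = (\<Sum>\<mu><N. \<Sum>j<m. rw (f \<mu>) j * (\<Sum>l<m. cnj (rw (f \<mu>) l) * ?W j l))"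
      unfolding one_form_hol one_form_ahol by (simp add: wedge_sum_left wedge_sum_right)
    also have "\<dots> = (\<Sum>j<m. \<Sum>l<m. (\<Sum>\<mu><N. rw (f \<mu>) j * cnj (rw (f \<mu>) l)) * ?W j l)"
      by (simp add: sum_distrib_left sum_distrib_right mult.assoc sum.swap[of _ "{..<N}"])
    also have "\<dots> = ddbar_form m idx r p K"
      unfolding ddbar_form_def
    proof (intro sum.cong refl)
      fix j l assume "j \<in> {..<m}" "l \<in> {..<m}"
      then have "j \<le> n" "l \<le> n" by (auto simp: m_def)
      then show "(\<Sum>\<mu><N. rw (f \<mu>) j * cnj (rw (f \<mu>) l)) * ?W j l = wz idx j (wzb idx l r) p * ?W j l"
        using r_second[OF U inj hf p _ _ r, of j l] by (simp add: rw_def)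
    qed
    finally show "ddbar_form m idx r p K = (\<Sum>\<mu><N. wl (PR (rw (f \<mu>))) K)" by simp
  qed
  have finT: "finite ?T"
    using finite_lists_length_eq[OF finite_lessThan[of N], of q] by (simp add: conj_commute)
  have PW: "feq (wedge_pow (ddbar_form m idx r p) q) (\<lambda>K. \<Sum>t\<in>?T. wl (concat (map (\<lambda>\<mu>. PR (rw (f \<mu>))) t)) K)"
    by (rule wedge_pow_expand[OF P])
  have D2: "feq (wedge (del_form m idx r p) (delbar_form m idx r p)) (wl (PR u))"
    unfolding D Db PR_def by (rule wl_pair)
  have BW: "feq (bigwedge (\<lambda>l. wedge (d_form m idx (G l) p) (d_form m idx (\<lambda>x. cnj (G l x)) p)) k)
                (wl (concat (map (\<lambda>l. PR (rw (G l))) [0..<k])))"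
    by (rule bigwedge_wl') (simp add: DG DGb PR_def wl_pair)
  let ?C = "\<lambda>t. concat (map (\<lambda>\<mu>. PR (rw (f \<mu>))) t)"
  let ?H = "concat (map (\<lambda>l. PR (rw (G l))) [0..<k])"
  let ?K0 = "{..<2 * m}"
  have fK0: "finite ?K0" by simp
  have step1: "wedge (wedge (wedge (del_form m idx r p) (delbar_form m idx r p)) (wedge_pow (ddbar_form m idx r p) q))
           (bigwedge (\<lambda>l. wedge (d_form m idx (G l) p) (d_form m idx (\<lambda>x. cnj (G l x)) p)) k) ?K0
        = wedge (wedge (wl (PR u)) (\<lambda>K. \<Sum>t\<in>?T. wl (?C t) K)) (wl ?H) ?K0"
    by (rule wedge_cong[OF feq_wedge[OF D2 PW] BW fK0])
  have step2: "feq (wedge (wl (PR u)) (\<lambda>K. \<Sum>t\<in>?T. wl (?C t) K)) (\<lambda>K. \<Sum>t\<in>?T. wedge (wl (PR u)) (wl (?C t)) K)"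
    by (simp add: feq_def wedge_sum_right1)
  have step3: "wedge (wedge (wl (PR u)) (\<lambda>K. \<Sum>t\<in>?T. wl (?C t) K)) (wl ?H) ?K0
      = (\<Sum>t\<in>?T. wedge (wedge (wl (PR u)) (wl (?C t))) (wl ?H) ?K0)"
    using wedge_cong[OF step2 feq_refl fK0] by (simp add: wedge_sum_left1)
  have step4: "wedge (wedge (wl (PR u)) (wl (?C t))) (wl ?H) ?K0
      = wl (map one_form (concat (map (\<lambda>a. [hol m a, ahol m a]) (rows t)))) ?K0" for t
  proof -
    have "feq (wedge (wl (PR u)) (wl (?C t))) (wl (PR u @ ?C t))" by (simp add: feq_def wl_append)
    then have "wedge (wedge (wl (PR u)) (wl (?C t))) (wl ?H) ?K0 = wedge (wl (PR u @ ?C t)) (wl ?H) ?K0"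
      by (rule wedge_cong[OF _ feq_refl fK0])
    also have "\<dots> = wl (PR u @ ?C t @ ?H) ?K0" using wl_append[OF fK0] by simp
    also have "PR u @ ?C t @ ?H = map one_form (concat (map (\<lambda>a. [hol m a, ahol m a]) (rows t)))"
      by (simp add: PR_def rows_def map_concat o_def)
    finally show ?thesis .
  qed
  define g where "g t = detm m (rows t) * cnj (detm m (rows t))" for t
  have lenrows: "length (rows t) = m" if "length t = q" for t
    using that kn by (simp add: rows_def m_def q_def)
  have step5: "wl (map one_form (concat (map (\<lambda>a. [hol m a, ahol m a]) (rows t)))) ?K0 = signof (blk m) * g t"
    if "t \<in> ?T" for t
    using top_pairs[of m "rows t"] lenrows that by (simp add: g_def)
  have Omega: "wedge (wedge (wedge (del_form m idx r p) (delbar_form m idx r p)) (wedge_pow (ddbar_form m idx r p) q))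
           (bigwedge (\<lambda>l. wedge (d_form m idx (G l) p) (d_form m idx (\<lambda>x. cnj (G l x)) p)) k) ?K0
      = signof (blk m) * (\<Sum>t\<in>?T. g t)"
    unfolding step1 step3 step4 sum_distrib_left by (rule sum.cong[OF refl]) (rule step5)
  have coll: "(\<Sum>t\<in>?T. g t) = of_nat (fact q) * (\<Sum>S\<in>{S. S \<subseteq> {..<N} \<and> card S = q}. g (sorted_list_of_set S))"
  proof (rule collapse)
    fix t assume t: "length t = q" "set t \<subseteq> {..<N}" "\<not> distinct t"
    then obtain i j where ij: "i < length t" "j < length t" "i \<noteq> j" "t ! i = t ! j"
      by (auto simp: distinct_conv_nth)
    have rn: "rows t ! Suc a = rw (f (t ! a))" if "a < length t" for a
      using that by (simp add: rows_def nth_append)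
    have "detm m (rows t) = 0"
    proof (cases "i < j")
      case True
      show ?thesis
        by (rule detm_identical[of "Suc i" "Suc j"]) (use True ij t kn rn in \<open>auto simp: m_def q_def\<close>)
    next
      case False
      then have "j < i" using ij by simp
      show ?thesis
        by (rule detm_identical[of "Suc j" "Suc i"]) (use \<open>j < i\<close> ij t kn rn in \<open>auto simp: m_def q_def\<close>)
    qed
    then show "g t = 0" by (simp add: g_def)
  next
    fix t assume t: "length t = q" "set t \<subseteq> {..<N}" "distinct t"
    let ?ss = "sorted_list_of_set (set t)"
    have "mset t = mset ?ss"
      using t(3) by (subst set_eq_iff_mset_eq_distinct[symmetric]) simp_all
    then obtain \<pi> where \<pi>: "\<pi> permutes {..<length ?ss}" "permute_list \<pi> ?ss = t"
      by (rule mset_eq_permutation)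
    have lss: "length ?ss = q" using t by (simp add: distinct_card)
    have r1: "rows t = u # map (rw \<circ> f) (permute_list \<pi> ?ss) @ map rw (map G [0..<k])"
      using \<pi>(2) by (simp add: rows_def)
    have r2: "rows ?ss = u # map (rw \<circ> f) ?ss @ map rw (map G [0..<k])"
      by (simp add: rows_def)
    have dp: "detm m (rows t) = signof (rho \<pi> (length ?ss)) * detm m (rows ?ss)"
      unfolding r1 r2 by (rule detm_perm[OF \<pi>(1)]) (use lss kn in \<open>simp add: m_def q_def\<close>)
    have "g t = (signof (rho \<pi> (length ?ss)) * signof (rho \<pi> (length ?ss))) * g ?ss"
      unfolding g_def dp by (simp add: algebra_simps)
    then show "g t = g ?ss" by (simp only: signof_sq mult_1_left)
  qed
  have gS: "g (sorted_list_of_set S) = complex_of_real ((cmod (jac idx (map f (sorted_list_of_set S) @ map G [0..<k]) p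
             + (\<Sum>\<mu><N. jac idx ((map f (sorted_list_of_set S) @ map G [0..<k]) @ [f \<mu>]) p * cnj (f \<mu> p)))) ^ 2)"
    if S: "S \<in> {S. S \<subseteq> {..<N} \<and> card S = q}" for S
  proof -
    let ?ss = "sorted_list_of_set S"
    let ?hs = "map f ?ss @ map G [0..<k]"
    let ?R = "map rw ?hs"
    have fin: "finite S" using S finite_subset by auto
    have cS: "card S = n - k" using S by (simp add: q_def)
    have "length ?hs = card S + k" using fin by simp
    then have lhs: "length ?hs = n" using cS kn by linarith
    have rowsS: "rows ?ss = u # ?R" by (simp add: rows_def)
    define e where "e = (\<lambda>j::nat. if j = n then (1::complex) else 0)"
    have u_eq: "u = (\<lambda>j. e j + (\<Sum>\<mu>\<in>{..<N}. cnj (f \<mu> p) * rw (f \<mu>) j))" by (simp add: u_def e_def)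
    have lin: "detm m (u # ?R) = detm m (e # ?R) + (\<Sum>\<mu>\<in>{..<N}. cnj (f \<mu> p) * detm m (rw (f \<mu>) # ?R))"
      unfolding u_eq by (rule detm_row0_lin) (simp_all add: m_def)
    have rot: "detm m (v # ?R) = signof (cyc n) * detm m (?R @ [v])" for v
      unfolding m_def by (rule detm_rotate) (use lhs in simp)
    have j0: "detm m (?R @ [e]) = jac idx ?hs p"
    proof -
      have "detm m (?R @ [e]) = detn n (\<lambda>i j. (?R ! i) j)"
        unfolding m_def e_def by (rule detm_last_unit) (use lhs in simp)
      also have "\<dots> = detn n (\<lambda>i j. wz idx j (?hs ! i) p)"
      proof (rule detn_cong)
        fix i j assume "i < n" "j < n"
        then have il: "i < length ?hs" using lhs by simp
        show "(?R ! i) j = wz idx j (?hs ! i) p" by (simp only: nth_map[OF il] rw_def)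
      qed
      finally show ?thesis using lhs by (simp add: jac_def)
    qed
    have j1: "detm m (?R @ [rw (f \<mu>)]) = jac idx (?hs @ [f \<mu>]) p" for \<mu>
    proof -
      have "detm m (?R @ [rw (f \<mu>)]) = detn m (\<lambda>i j. ((?R @ [rw (f \<mu>)]) ! i) j)" by (rule detm_detn)
      also have "\<dots> = detn m (\<lambda>i j. wz idx j ((?hs @ [f \<mu>]) ! i) p)"
      proof (rule detn_cong)
        fix i j assume "i < m" "j < m"
        then show "((?R @ [rw (f \<mu>)]) ! i) j = wz idx j ((?hs @ [f \<mu>]) ! i) p"
          using lhs by (cases "i < n") (auto simp: nth_append rw_def m_def)
      qed
      finally show ?thesis using lhs by (simp add: jac_def m_def)
    qed
    define X where "X = jac idx ?hs p + (\<Sum>\<mu><N. jac idx (?hs @ [f \<mu>]) p * cnj (f \<mu> p))"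
    have dX: "detm m (rows ?ss) = signof (cyc n) * X"
    proof -
      have "detm m (rows ?ss) = detm m (e # ?R) + (\<Sum>\<mu>\<in>{..<N}. cnj (f \<mu> p) * detm m (rw (f \<mu>) # ?R))"
        unfolding rowsS by (rule lin)
      also have "\<dots> = signof (cyc n) * detm m (?R @ [e]) + (\<Sum>\<mu>\<in>{..<N}. cnj (f \<mu> p) * (signof (cyc n) * detm m (?R @ [rw (f \<mu>)])))"
        by (simp only: rot)
      also have "\<dots> = signof (cyc n) * jac idx ?hs p + (\<Sum>\<mu><N. cnj (f \<mu> p) * (signof (cyc n) * jac idx (?hs @ [f \<mu>]) p))"
        by (simp only: j0 j1)
      also have "\<dots> = signof (cyc n) * X"
        unfolding X_def by (simp add: distrib_left sum_distrib_left algebra_simps)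
      finally show ?thesis .
    qed
    have "g ?ss = (signof (cyc n) * signof (cyc n)) * (X * cnj X)"
      unfolding g_def dX by (simp add: algebra_simps)
    also have "\<dots> = X * cnj X" by (simp only: signof_sq mult_1_left)
    also have "\<dots> = complex_of_real ((cmod X) ^ 2)" by (rule complex_norm_square[symmetric])
    finally show ?thesis by (simp add: X_def)
  qed
  have fin: "(\<Sum>S\<in>{S. S \<subseteq> {..<N} \<and> card S = q}. g (sorted_list_of_set S))
    = complex_of_real (\<Sum>S\<in>{S. S \<subseteq> {..<N} \<and> card S = q}.
          cmod (jac idx (map f (sorted_list_of_set S) @ map G [0..<k]) p
             + (\<Sum>\<mu><N. jac idx ((map f (sorted_list_of_set S) @ map G [0..<k]) @ [f \<mu>]) p * cnj (f \<mu> p))) ^ 2)"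
    unfolding of_real_sum by (rule sum.cong[OF refl]) (rule gS)
  show ?thesis
    unfolding m_def[symmetric] q_def[symmetric] Omega coll fin by (simp add: mult.assoc)
qed

theorem mainTheorem4:
  fixes n k :: nat
  assumes card: "CARD('m::finite) = Suc n"
      and kn: "k \<le> n"
  shows "\<exists>c::complex. c \<noteq> 0 \<and>
    (\<forall>(idx :: nat \<Rightarrow> 'm) (N::nat) (f :: nat \<Rightarrow> complex ^ 'm \<Rightarrow> complex)
       (G :: nat \<Rightarrow> complex ^ 'm \<Rightarrow> complex) (U :: (complex ^ 'm) set) (p :: complex ^ 'm).
       bij_betw idx {..n} UNIV \<longrightarrow> open U \<longrightarrow>
       (\<forall>\<mu><N. holo_on U (f \<mu>)) \<longrightarrow> (\<forall>l<k. holo_on U (G l)) \<longrightarrow> p \<in> U \<longrightarrow>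
       (let m = Suc n;
            r = (\<lambda>x. x $ idx n + cnj (x $ idx n) + (\<Sum>\<mu><N. f \<mu> x * cnj (f \<mu> x)));
            \<Omega> = wedge (wedge (wedge (del_form m idx r p) (delbar_form m idx r p))
                              (wedge_pow (ddbar_form m idx r p) (n - k)))
                       (bigwedge (\<lambda>l. wedge (d_form m idx (G l) p)
                                              (d_form m idx (\<lambda>x. cnj (G l x)) p)) k)
        in \<Omega> {..<2 * m} =
           c * complex_of_real
             (\<Sum>S \<in> {S. S \<subseteq> {..<N} \<and> card S = n - k}.
                (let hs = map f (sorted_list_of_set S) @ map G [0..<k]
                 in cmod (jac idx hs p
                          + (\<Sum>\<mu><N. jac idx (hs @ [f \<mu>]) p * cnj (f \<mu> p)))) ^ 2)))"
proof -
  define c :: complex where "c = signof (blk (Suc n)) * of_nat (fact (n - k))"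
  have c0: "c \<noteq> 0"
  proof -
    have "sign (blk (Suc n)) \<noteq> (0::int)" by (simp add: sign_def)
    then show ?thesis by (simp add: c_def)
  qed
  show ?thesis
  proof (rule exI[of _ c], intro conjI c0 allI impI)
    fix idx :: "nat \<Rightarrow> 'm" and N :: nat and f G :: "nat \<Rightarrow> complex ^ 'm \<Rightarrow> complex"
      and U :: "(complex ^ 'm) set" and p :: "complex ^ 'm"
    assume bij: "bij_betw idx {..n} UNIV" and U: "open U" and hf: "\<forall>\<mu><N. holo_on U (f \<mu>)"
      and hG: "\<forall>l<k. holo_on U (G l)" and p: "p \<in> U"
    have hf': "\<And>\<mu>. \<mu> < N \<Longrightarrow> holo_on U (f \<mu>)" using hf by blast
    have hG': "\<And>l. l < k \<Longrightarrow> holo_on U (G l)" using hG by blast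
    show "let m = Suc n;
            r = (\<lambda>x. x $ idx n + cnj (x $ idx n) + (\<Sum>\<mu><N. f \<mu> x * cnj (f \<mu> x)));
            \<Omega> = wedge (wedge (wedge (del_form m idx r p) (delbar_form m idx r p))
                              (wedge_pow (ddbar_form m idx r p) (n - k)))
                       (bigwedge (\<lambda>l. wedge (d_form m idx (G l) p)
                                              (d_form m idx (\<lambda>x. cnj (G l x)) p)) k)
        in \<Omega> {..<2 * m} =
           c * complex_of_real
             (\<Sum>S \<in> {S. S \<subseteq> {..<N} \<and> card S = n - k}.
                (let hs = map f (sorted_list_of_set S) @ map G [0..<k]
                 in cmod (jac idx hs p
                          + (\<Sum>\<mu><N. jac idx (hs @ [f \<mu>]) p * cnj (f \<mu> p)))) ^ 2)"
      unfolding Let_def c_def by (rule main_eval[OF kn bij U hf' hG' p refl])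
  qed
qed

end
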